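(* Let $V,V'$ be finite-dimensional $\mathfrak l_m$-modules on which $E_x$ acts by scalars $c$ and $c'$ respectively. Then $\mathrm{Hom}_{\mathfrak b_m}(\mathcal F(V),\mathcal F(V'))=0$ unless $c'-c\in\mathbb N$, and if $c'-c\in\mathbb N$ it is isomorphic to the space of $\mathfrak l_m$-invariants $\bigl[\mathbb C[\partial_x]_{(c-c')}\otimes\mathrm{Hom}(V,V')\bigr]^{\mathfrak l_m}$, where $\mathbb C[\partial_x]_{(c-c')}$ denotes the homogeneous polynomials of degree $c'-c$ in $\partial_{x_1},\dots,\partial_{x_m}$.
   Context: $\mathrm{Vec}\,\mathbb R^m$ is the Lie algebra of complex polynomial vector fields on $\mathbb R^m$; $E_x=\sum_r x_r\partial_{x_r}$; $\mathfrak b_m=\mathrm{Span}\{\partial_{x_i},x_j\partial_{x_i}\}$, $\mathfrak l_m=\mathrm{Span}\{x_j\partial_{x_i}\}$. For a finite-dimensional $\mathfrak l_m$-representation $(\phi,V)$, $\mathcal F(V)=\mathbb C[x]\otimes V$ with $\mathrm{Lie}_\phi(X)h=\sum_jX_j\partial_{x_j}h+\sum_{i,j}(\partial_{x_i}X_j)\phi(x_i\partial_{x_j})h$. The algebra $\mathbb C[\partial_x]$ of constant-coefficient differential operators is an $\mathfrak l_m$-module via commutators, $\mathrm{Hom}(V,V')$ via $Y\cdot\tau=\phi'(Y)\tau-\tau\phi(Y)$, and their tensor product via the diagonal action. *)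

theory Defs
  imports Complex_Main
begin

(* Conventions.
   - The variables x_1..x_m are indexed by a finite type 'm.
   - A monomial x^alpha is an exponent vector alpha :: 'm => nat.
   - A (V-valued) polynomial, i.e. an element of C[x] (x) V, is a finitely
     supported function ('m => nat) => 'v (coefficient of x^alpha).
   - Finite-dimensional complex vector spaces are given by a scalar
     multiplication sc on a type 'v (locale finite_dimensional_vector_space). *)

definition deg :: "('m::finite \<Rightarrow> nat) \<Rightarrow> nat" where
  "deg \<alpha> = (\<Sum>k\<in>UNIV. \<alpha> k)"

definition polys :: "(('m::finite \<Rightarrow> nat) \<Rightarrow> 'a::zero) set" where
  "polys = {h. finite {\<alpha>. h \<alpha> \<noteq> 0}}"

definition pder :: "(complex \<Rightarrow> 'a \<Rightarrow> 'a) \<Rightarrow> 'm::finite \<Rightarrow>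
    (('m \<Rightarrow> nat) \<Rightarrow> 'a) \<Rightarrow> (('m \<Rightarrow> nat) \<Rightarrow> 'a)" where
  "pder sc j h = (\<lambda>\<alpha>. sc (of_nat (\<alpha> j + 1)) (h (\<alpha>(j := \<alpha> j + 1))))"

definition pmult :: "(complex \<Rightarrow> 'a::comm_monoid_add \<Rightarrow> 'a) \<Rightarrow> (('m::finite \<Rightarrow> nat) \<Rightarrow> complex) \<Rightarrow>
    (('m \<Rightarrow> nat) \<Rightarrow> 'a) \<Rightarrow> (('m \<Rightarrow> nat) \<Rightarrow> 'a)" where
  "pmult sc p h = (\<lambda>\<alpha>. \<Sum>\<beta>\<in>{\<beta>. \<beta> \<le> \<alpha>}. sc (p \<beta>) (h (\<lambda>k. \<alpha> k - \<beta> k)))"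

text \<open>Polynomial vector fields X = sum_j X_j d/dx_j are functions X :: 'm => C[x]
  (X j is the coefficient polynomial X_j).  b_m = Span{d/dx_i, x_j d/dx_i}
  consists exactly of the fields whose coefficients have degree at most 1.\<close>
definition bm :: "('m::finite \<Rightarrow> (('m \<Rightarrow> nat) \<Rightarrow> complex)) set" where
  "bm = {X. \<forall>j \<alpha>. X j \<alpha> \<noteq> 0 \<longrightarrow> deg \<alpha> \<le> 1}"

text \<open>An l_m-representation on V: phi a b is the operator phi(x_a d/dx_b).
  Since l_m has basis {x_a d/dx_b}, a representation is the same as a family of
  linear maps satisfying the bracket relations
  [x_a d_b, x_c d_d] = delta_bc x_a d_d - delta_da x_c d_b.\<close>
definition is_lm_rep :: "(complex \<Rightarrow> 'v::ab_group_add \<Rightarrow> 'v) \<Rightarrow> ('m \<Rightarrow> 'm \<Rightarrow> 'v \<Rightarrow> 'v) \<Rightarrow> bool" where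
  "is_lm_rep sc \<phi> \<longleftrightarrow>
     (\<forall>a b. Vector_Spaces.linear sc sc (\<phi> a b)) \<and>
     (\<forall>a b c d v. \<phi> a b (\<phi> c d v) - \<phi> c d (\<phi> a b v) =
        (if b = c then \<phi> a d v else 0) - (if d = a then \<phi> c b v else 0))"

text \<open>E_x = sum_r x_r d/dx_r acts by the scalar c.\<close>
definition Ex_acts_by :: "(complex \<Rightarrow> 'v::ab_group_add \<Rightarrow> 'v) \<Rightarrow> ('m::finite \<Rightarrow> 'm \<Rightarrow> 'v \<Rightarrow> 'v) \<Rightarrow> complex \<Rightarrow> bool" where
  "Ex_acts_by sc \<phi> c \<longleftrightarrow> (\<forall>v. (\<Sum>r\<in>UNIV. \<phi> r r v) = sc c v)"

definition Lie :: "(complex \<Rightarrow> 'v::ab_group_add \<Rightarrow> 'v) \<Rightarrow> ('m::finite \<Rightarrow> 'm \<Rightarrow> 'v \<Rightarrow> 'v) \<Rightarrow>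
    ('m \<Rightarrow> (('m \<Rightarrow> nat) \<Rightarrow> complex)) \<Rightarrow> (('m \<Rightarrow> nat) \<Rightarrow> 'v) \<Rightarrow> (('m \<Rightarrow> nat) \<Rightarrow> 'v)" where
  "Lie sc \<phi> X h = (\<lambda>\<alpha>.
     (\<Sum>j\<in>UNIV. pmult sc (X j) (pder sc j h) \<alpha>) +
     (\<Sum>i\<in>UNIV. \<Sum>j\<in>UNIV. pmult sc (pder (*) i (X j)) (\<lambda>\<beta>. \<phi> i j (h \<beta>)) \<alpha>))"

text \<open>Hom_{b_m}(F(V),F(V')): C-linear maps F(V) -> F(V') commuting with Lie(X), X in b_m.
  Maps are taken extensional (zero outside F(V)) so the set is exactly the hom space.\<close>
definition HomB :: "(complex \<Rightarrow> 'v::ab_group_add \<Rightarrow> 'v) \<Rightarrow> ('m::finite \<Rightarrow> 'm \<Rightarrow> 'v \<Rightarrow> 'v) \<Rightarrow>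
    (complex \<Rightarrow> 'w::ab_group_add \<Rightarrow> 'w) \<Rightarrow> ('m \<Rightarrow> 'm \<Rightarrow> 'w \<Rightarrow> 'w) \<Rightarrow>
    ((('m \<Rightarrow> nat) \<Rightarrow> 'v) \<Rightarrow> (('m \<Rightarrow> nat) \<Rightarrow> 'w)) set" where
  "HomB scV \<phi> scW \<psi> = {T.
     (\<forall>h\<in>polys. T h \<in> polys) \<and>
     (\<forall>h. h \<notin> polys \<longrightarrow> T h = (\<lambda>_. 0)) \<and>
     (\<forall>h\<in>polys. \<forall>g\<in>polys. T (\<lambda>\<alpha>. h \<alpha> + g \<alpha>) = (\<lambda>\<alpha>. T h \<alpha> + T g \<alpha>)) \<and>
     (\<forall>a. \<forall>h\<in>polys. T (\<lambda>\<alpha>. scV a (h \<alpha>)) = (\<lambda>\<alpha>. scW a (T h \<alpha>))) \<and>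
     (\<forall>X\<in>bm. \<forall>h\<in>polys. T (Lie scV \<phi> X h) = Lie scW \<psi> X (T h))}"

definition hom_add where "hom_add T S = (\<lambda>h \<alpha>. T h \<alpha> + S h \<alpha>)"
definition hom_scale where "hom_scale sc a T = (\<lambda>h \<alpha>. sc a (T h \<alpha>))"

text \<open>The l_m-module C[d_x] (action by commutators): for Y = x_j d_i,
  [x_j d_i, d^gamma] = - gamma_j d^(gamma - e_j + e_i).  dact j i gamma delta is the
  coefficient of d^delta in (x_j d_i) . d^gamma.\<close>
definition dact :: "'m \<Rightarrow> 'm \<Rightarrow> ('m \<Rightarrow> nat) \<Rightarrow> ('m \<Rightarrow> nat) \<Rightarrow> complex" where
  "dact j i \<gamma> \<delta> =
     (if 1 \<le> \<gamma> j \<and> \<delta> = (\<gamma>(j := \<gamma> j - 1))(i := (\<gamma>(j := \<gamma> j - 1)) i + 1)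
      then - of_nat (\<gamma> j) else 0)"

text \<open>C[d_x]_(n) (x) Hom(V,V'): elements sum_{deg gamma = n} d^gamma (x) tau_gamma,
  represented by the coefficient family tau.  The l_m-invariants are those
  annihilated by every basis element x_j d_i of l_m under the diagonal action
  Y.(D (x) tau) = (Y.D) (x) tau + D (x) (phi'(Y) tau - tau phi(Y)).\<close>
definition InvT :: "(complex \<Rightarrow> 'v::ab_group_add \<Rightarrow> 'v) \<Rightarrow> ('m::finite \<Rightarrow> 'm \<Rightarrow> 'v \<Rightarrow> 'v) \<Rightarrow>
    (complex \<Rightarrow> 'w::ab_group_add \<Rightarrow> 'w) \<Rightarrow> ('m \<Rightarrow> 'm \<Rightarrow> 'w \<Rightarrow> 'w) \<Rightarrow> nat \<Rightarrow>
    (('m \<Rightarrow> nat) \<Rightarrow> 'v \<Rightarrow> 'w) set" where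
  "InvT scV \<phi> scW \<psi> n = {\<tau>.
     (\<forall>\<gamma>. Vector_Spaces.linear scV scW (\<tau> \<gamma>)) \<and>
     (\<forall>\<gamma>. deg \<gamma> \<noteq> n \<longrightarrow> \<tau> \<gamma> = (\<lambda>_. 0)) \<and>
     (\<forall>j i \<delta> v.
        (\<Sum>\<gamma>\<in>{\<gamma>. deg \<gamma> = n}. scW (dact j i \<gamma> \<delta>) (\<tau> \<gamma> v))
        + \<psi> j i (\<tau> \<delta> v) - \<tau> \<delta> (\<phi> j i v) = 0)}"

definition tau_add where "tau_add \<tau> \<sigma> = (\<lambda>\<gamma> v. \<tau> \<gamma> v + \<sigma> \<gamma> v)"
definition tau_scale where "tau_scale sc a \<tau> = (\<lambda>\<gamma> v. sc a (\<tau> \<gamma> v))"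

end

theory Submission
  imports Defs "HOL-Library.FuncSet"
begin

lemma one_plus_of_nat_nz[simp]: "1 + (of_nat b :: complex) \<noteq> 0" "(of_nat b :: complex) + 1 \<noteq> 0"
proof -
  have "(of_nat (Suc b) :: complex) \<noteq> 0" by (simp only: of_nat_eq_0_iff)
  then show "1 + (of_nat b :: complex) \<noteq> 0" "(of_nat b :: complex) + 1 \<noteq> 0" by (simp_all add: add.commute)
qed

definition ee :: "'m \<Rightarrow> 'm \<Rightarrow> nat" where "ee i = (\<lambda>_. 0)(i := 1)"

lemma deg_split: "deg (\<beta>::'m::finite \<Rightarrow> nat) = \<beta> i + (\<Sum>k\<in>UNIV-{i}. \<beta> k)"
  by (simp add: deg_def sum.remove)

lemma deg_upd: "deg ((\<beta>::'m::finite \<Rightarrow> nat)(i := x)) + \<beta> i = deg \<beta> + x"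
proof -
  have "(\<Sum>k\<in>UNIV-{i}. (\<beta>(i := x)) k) = (\<Sum>k\<in>UNIV-{i}. \<beta> k)"
    by (rule sum.cong) auto
  then show ?thesis using deg_split[of "\<beta>(i:=x)" i] deg_split[of \<beta> i] by simp
qed

lemma deg_upd_Suc: "deg ((\<beta>::'m::finite \<Rightarrow> nat)(i := \<beta> i + 1)) = deg \<beta> + 1"
  using deg_upd[of \<beta> i "\<beta> i + 1"] by simp

lemma deg_zero[simp]: "deg (\<lambda>_::'m::finite. 0::nat) = 0"
  by (simp add: deg_def)

lemma deg_ee[simp]: "deg (ee (i::'m::finite)) = 1"
  using deg_upd_Suc[of "\<lambda>_. 0" i] by (simp add: ee_def)

lemma ee_neq0[simp]: "ee i \<noteq> (\<lambda>_. 0)" "(\<lambda>_. 0) \<noteq> ee i"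
  by (auto simp: ee_def fun_eq_iff)

lemma ee_inj[simp]: "ee i = ee j \<longleftrightarrow> i = j"
  by (auto simp: ee_def fun_eq_iff split: if_splits)

lemma deg_le1:
  assumes "deg (\<beta>::'m::finite \<Rightarrow> nat) \<le> 1"
  shows "\<beta> = (\<lambda>_. 0) \<or> (\<exists>i. \<beta> = ee i)"
proof (cases "\<beta> = (\<lambda>_. 0)")
  case False
  then obtain i where i: "\<beta> i \<noteq> 0" by auto
  have d: "\<beta> i + (\<Sum>k\<in>UNIV-{i}. \<beta> k) \<le> 1" using assms deg_split[of \<beta> i] by simp
  then have b1: "\<beta> i = 1" using i by linarith
  have "(\<Sum>k\<in>UNIV-{i}. \<beta> k) = 0" using d b1 by linarith
  then have "\<forall>k\<in>UNIV-{i}. \<beta> k = 0" by simp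
  then have "\<beta> = ee i" using b1 by (auto simp: ee_def fun_eq_iff)
  then show ?thesis by blast
qed simp

lemma finite_bounded_funs: "finite {f::'m::finite \<Rightarrow> nat. \<forall>k. f k \<le> N k}"
proof -
  have "{f::'m \<Rightarrow> nat. \<forall>k. f k \<le> N k} = PiE UNIV (\<lambda>k. {..N k})"
    by (auto simp: PiE_def Pi_def)
  then show ?thesis by (simp add: finite_PiE)
qed

lemma finite_le: "finite {\<beta>::'m::finite \<Rightarrow> nat. \<beta> \<le> \<alpha>}"
  by (rule finite_subset[OF _ finite_bounded_funs[of \<alpha>]]) (auto simp: le_fun_def)

lemma finite_deg: "finite {\<gamma>::'m::finite \<Rightarrow> nat. deg \<gamma> = n}"
proof -
  have "\<gamma> k \<le> n" if "deg \<gamma> = n" for \<gamma> :: "'m \<Rightarrow> nat" and k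
    using that deg_split[of \<gamma> k] by simp
  then show ?thesis
    by (intro finite_subset[OF _ finite_bounded_funs[of "\<lambda>_. n"]]) auto
qed


definition mulx :: "'m \<Rightarrow> (('m \<Rightarrow> nat) \<Rightarrow> 'a::zero) \<Rightarrow> (('m \<Rightarrow> nat) \<Rightarrow> 'a)" where
  "mulx i g = (\<lambda>\<alpha>. if 1 \<le> \<alpha> i then g (\<alpha>(i := \<alpha> i - 1)) else 0)"

definition Sx :: "(complex \<Rightarrow> 'a::zero \<Rightarrow> 'a) \<Rightarrow> 'm::finite \<Rightarrow> 'm \<Rightarrow> (('m \<Rightarrow> nat) \<Rightarrow> 'a) \<Rightarrow> (('m \<Rightarrow> nat) \<Rightarrow> 'a)" where
  "Sx sc i j h = mulx i (pder sc j h)"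

locale cvs =
  fixes sc :: "complex \<Rightarrow> 'v::ab_group_add \<Rightarrow> 'v"
  assumes vs: "vector_space sc"
begin

sublocale vector_space sc by (rule vs)

lemma pder_add: "pder sc k (\<lambda>\<alpha>. f \<alpha> + g \<alpha>) = (\<lambda>\<alpha>. pder sc k f \<alpha> + pder sc k g \<alpha>)"
  by (simp add: pder_def scale_right_distrib)

lemma pder_diff: "pder sc k (\<lambda>\<alpha>. f \<alpha> - g \<alpha>) = (\<lambda>\<alpha>. pder sc k f \<alpha> - pder sc k g \<alpha>)"
  by (simp add: pder_def scale_right_diff_distrib)

lemma pder_scale: "pder sc k (\<lambda>\<alpha>. sc a (f \<alpha>)) = (\<lambda>\<alpha>. sc a (pder sc k f \<alpha>))"
  by (simp add: pder_def mult.commute)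

lemma pder_sum: "pder sc k (\<lambda>\<alpha>. \<Sum>x\<in>A. F x \<alpha>) = (\<lambda>\<alpha>. \<Sum>x\<in>A. pder sc k (F x) \<alpha>)"
  by (simp add: pder_def scale_sum_right)

lemma pder_zero: "pder sc k (\<lambda>_. 0) = (\<lambda>_. 0)"
  by (simp add: pder_def)

lemma pder_comm: "pder sc k (pder sc j g) = pder sc j (pder sc k g)"
  by (cases "k = j") (auto simp: pder_def fun_eq_iff fun_upd_twist mult.commute)

lemma pder_mulx: "pder sc k (mulx i g) = (\<lambda>\<alpha>. mulx i (pder sc k g) \<alpha> + (if k = i then g \<alpha> else 0))"
proof (cases "k = i")
  case True
  show ?thesis
  proof
    fix \<alpha> :: "'a \<Rightarrow> nat"
    show "pder sc k (mulx i g) \<alpha> = mulx i (pder sc k g) \<alpha> + (if k = i then g \<alpha> else 0)"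
    proof (cases "1 \<le> \<alpha> i")
      case True
      then have "(\<alpha>(i := \<alpha> i - 1))(i := \<alpha> i - 1 + 1) = \<alpha>" by (auto simp: fun_eq_iff)
      then show ?thesis using True \<open>k = i\<close>
        by (simp add: pder_def mulx_def scale_left_distrib[symmetric] algebra_simps)
    next
      case False
      then have "\<alpha> i = 0" by simp
      then show ?thesis using \<open>k = i\<close> by (simp add: pder_def mulx_def)
    qed
  qed
next
  case False
  then show ?thesis
    by (auto simp: pder_def mulx_def fun_eq_iff fun_upd_twist)
qed

lemma pder_lin:
  assumes "Vector_Spaces.linear sc2 sc f"
  shows "pder sc k (\<lambda>\<alpha>. f (h \<alpha>)) = (\<lambda>\<alpha>. f (pder sc2 k h \<alpha>))"
proof -
  from assms have "\<forall>c x. f (sc2 c x) = sc c (f x)" by (simp add: Vector_Spaces.linear_iff)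
  then show ?thesis by (simp add: pder_def)
qed

lemma Sx_pder: "pder sc k (Sx sc i j h) = (\<lambda>\<alpha>. Sx sc i j (pder sc k h) \<alpha> + (if k = i then pder sc j h \<alpha> else 0))"
  by (simp add: Sx_def pder_mulx pder_comm)

lemma pmult_bm:
  assumes "\<forall>\<beta>. p \<beta> \<noteq> 0 \<longrightarrow> deg \<beta> \<le> 1"
  shows "pmult sc p g \<alpha> = sc (p (\<lambda>_. 0)) (g \<alpha>) +
    (\<Sum>i\<in>UNIV. if 1 \<le> \<alpha> i then sc (p (ee i)) (g (\<alpha>(i := \<alpha> i - 1))) else 0)"
proof -
  define F where "F \<beta> = sc (p \<beta>) (g (\<lambda>k. \<alpha> k - \<beta> k))" for \<beta>
  define A0 where "A0 = insert (\<lambda>_. 0) (ee ` {i. 1 \<le> \<alpha> i})"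
  have sub: "A0 \<subseteq> {\<beta>. \<beta> \<le> \<alpha>}"
    by (auto simp: A0_def le_fun_def ee_def)
  have z: "\<forall>\<beta>\<in>{\<beta>. \<beta> \<le> \<alpha>} - A0. F \<beta> = 0"
  proof
    fix \<beta> assume b: "\<beta> \<in> {\<beta>. \<beta> \<le> \<alpha>} - A0"
    have "p \<beta> = 0"
    proof (rule ccontr)
      assume "p \<beta> \<noteq> 0"
      then have "deg \<beta> \<le> 1" using assms by blast
      then have "\<beta> = (\<lambda>_. 0) \<or> (\<exists>i. \<beta> = ee i)" by (rule deg_le1)
      then show False
      proof
        assume "\<beta> = (\<lambda>_. 0)" then show False using b by (auto simp: A0_def)
      next
        assume "\<exists>i. \<beta> = ee i"
        then obtain i where i: "\<beta> = ee i" by blast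
        then have "1 \<le> \<alpha> i" using b by (auto simp: le_fun_def ee_def dest: spec[of _ i])
        then show False using b i by (auto simp: A0_def)
      qed
    qed
    then show "F \<beta> = 0" by (simp add: F_def)
  qed
  have "pmult sc p g \<alpha> = sum F {\<beta>. \<beta> \<le> \<alpha>}" by (simp add: pmult_def F_def)
  also have "\<dots> = sum F A0"
    by (rule sum.mono_neutral_right[OF finite_le sub z])
  also have "\<dots> = F (\<lambda>_. 0) + sum F (ee ` {i. 1 \<le> \<alpha> i})"
    unfolding A0_def by (rule sum.insert) auto
  also have "sum F (ee ` {i. 1 \<le> \<alpha> i}) = (\<Sum>i\<in>{i. 1 \<le> \<alpha> i}. F (ee i))"
    by (rule sum.reindex_cong[where l=ee]) (auto simp: inj_on_def)
  also have "\<dots> = (\<Sum>i\<in>UNIV. if 1 \<le> \<alpha> i then F (ee i) else 0)"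
    using sum.inter_filter[of UNIV "\<lambda>i. F (ee i)" "\<lambda>i. 1 \<le> \<alpha> i"] by simp
  also have "\<dots> = (\<Sum>i\<in>UNIV. if 1 \<le> \<alpha> i then sc (p (ee i)) (g (\<alpha>(i := \<alpha> i - 1))) else 0)"
  proof (rule sum.cong[OF refl])
    fix i
    have "(\<lambda>k. \<alpha> k - ee i k) = \<alpha>(i := \<alpha> i - 1)" by (auto simp: ee_def fun_eq_iff)
    then show "(if 1 \<le> \<alpha> i then F (ee i) else 0) = (if 1 \<le> \<alpha> i then sc (p (ee i)) (g (\<alpha>(i := \<alpha> i - 1))) else 0)"
      by (simp add: F_def)
  qed
  finally show ?thesis by (simp add: F_def)
qed

lemma Lie_bm:
  assumes X: "X \<in> bm"
  shows "Lie sc \<phi> X h = (\<lambda>\<alpha>. (\<Sum>j\<in>UNIV. sc (X j (\<lambda>_. 0)) (pder sc j h \<alpha>)) +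
     (\<Sum>i\<in>UNIV. \<Sum>j\<in>UNIV. sc (X j (ee i)) (Sx sc i j h \<alpha> + \<phi> i j (h \<alpha>))))"
proof
  fix \<alpha> :: "'a \<Rightarrow> nat"
  have s1: "\<forall>\<beta>. X j \<beta> \<noteq> 0 \<longrightarrow> deg \<beta> \<le> 1" for j using X by (auto simp: bm_def)
  have A: "pmult sc (X j) (pder sc j h) \<alpha> = sc (X j (\<lambda>_. 0)) (pder sc j h \<alpha>) +
      (\<Sum>i\<in>UNIV. sc (X j (ee i)) (Sx sc i j h \<alpha>))" for j
    by (simp add: pmult_bm[OF s1] Sx_def mulx_def if_distrib cong: if_cong)
  have s2: "\<forall>\<beta>. pder (*) i (X j) \<beta> \<noteq> 0 \<longrightarrow> deg \<beta> \<le> 1" for i j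
  proof (intro allI impI)
    fix \<beta> assume "pder (*) i (X j) \<beta> \<noteq> 0"
    then have "X j (\<beta>(i := \<beta> i + 1)) \<noteq> 0" by (simp add: pder_def)
    then have "deg (\<beta>(i := \<beta> i + 1)) \<le> 1" using s1 by blast
    then show "deg \<beta> \<le> 1" using deg_upd_Suc[of \<beta> i] by simp
  qed
  have p0: "pder (*) i (X j) (\<lambda>_. 0) = X j (ee i)" for i j
    by (simp add: pder_def ee_def)
  have pe: "pder (*) i (X j) (ee i') = 0" for i j i'
  proof -
    have "deg ((ee i')(i := ee i' i + 1)) = 2" using deg_upd_Suc[of "ee i'" i] by simp
    then have "X j ((ee i')(i := ee i' i + 1)) = 0" using s1[of j] by force
    then show ?thesis by (simp add: pder_def)
  qed
  have B: "pmult sc (pder (*) i (X j)) (\<lambda>\<beta>. \<phi> i j (h \<beta>)) \<alpha> = sc (X j (ee i)) (\<phi> i j (h \<alpha>))" for i j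
    using pe[of i j] apply (simp add: pmult_bm[OF s2] p0)
    apply (rule sum.neutral) apply (simp only: pe[of i j] scale_zero_left if_cancel)
    by simp
  have "Lie sc \<phi> X h \<alpha> = (\<Sum>j\<in>UNIV. sc (X j (\<lambda>_. 0)) (pder sc j h \<alpha>) +
      (\<Sum>i\<in>UNIV. sc (X j (ee i)) (Sx sc i j h \<alpha>))) +
      (\<Sum>i\<in>UNIV. \<Sum>j\<in>UNIV. sc (X j (ee i)) (\<phi> i j (h \<alpha>)))"
    by (simp add: Lie_def A B)
  also have "\<dots> = (\<Sum>j\<in>UNIV. sc (X j (\<lambda>_. 0)) (pder sc j h \<alpha>)) +
      ((\<Sum>i\<in>UNIV. \<Sum>j\<in>UNIV. sc (X j (ee i)) (Sx sc i j h \<alpha>)) +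
      (\<Sum>i\<in>UNIV. \<Sum>j\<in>UNIV. sc (X j (ee i)) (\<phi> i j (h \<alpha>))))"
  proof -
    have "(\<Sum>j\<in>UNIV. \<Sum>i\<in>UNIV. sc (X j (ee i)) (Sx sc i j h \<alpha>)) = (\<Sum>i\<in>UNIV. \<Sum>j\<in>UNIV. sc (X j (ee i)) (Sx sc i j h \<alpha>))"
      by (rule sum.swap)
    then show ?thesis by (simp only: sum.distrib add.assoc)
  qed
  also have "\<dots> = (\<Sum>j\<in>UNIV. sc (X j (\<lambda>_. 0)) (pder sc j h \<alpha>)) +
     (\<Sum>i\<in>UNIV. \<Sum>j\<in>UNIV. sc (X j (ee i)) (Sx sc i j h \<alpha> + \<phi> i j (h \<alpha>)))"
    by (simp add: sum.distrib[symmetric] scale_right_distrib)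
  finally show "Lie sc \<phi> X h \<alpha> = (\<Sum>j\<in>UNIV. sc (X j (\<lambda>_. 0)) (pder sc j h \<alpha>)) +
     (\<Sum>i\<in>UNIV. \<Sum>j\<in>UNIV. sc (X j (ee i)) (Sx sc i j h \<alpha> + \<phi> i j (h \<alpha>)))" .
qed

end


definition mono :: "('m \<Rightarrow> nat) \<Rightarrow> 'a::zero \<Rightarrow> (('m \<Rightarrow> nat) \<Rightarrow> 'a)" where
  "mono \<gamma> v = (\<lambda>\<alpha>. if \<alpha> = \<gamma> then v else 0)"

definition dfield :: "'m \<Rightarrow> 'm \<Rightarrow> ('m \<Rightarrow> nat) \<Rightarrow> complex" where
  "dfield k = (\<lambda>j \<beta>. if j = k \<and> \<beta> = (\<lambda>_. 0) then 1 else 0)"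
definition xfield :: "'m \<Rightarrow> 'm \<Rightarrow> 'm \<Rightarrow> ('m \<Rightarrow> nat) \<Rightarrow> complex" where
  "xfield i j = (\<lambda>j' \<beta>. if j' = j \<and> \<beta> = ee i then 1 else 0)"
definition Efield :: "'m \<Rightarrow> ('m \<Rightarrow> nat) \<Rightarrow> complex" where
  "Efield = (\<lambda>j \<beta>. if \<beta> = ee j then 1 else 0)"

lemma dfield_bm: "dfield (k::'m::finite) \<in> bm"
  by (auto simp: bm_def dfield_def)
lemma xfield_bm: "xfield i (j::'m::finite) \<in> bm"
  by (auto simp: bm_def xfield_def)
lemma Efield_bm: "(Efield::'m::finite \<Rightarrow> _) \<in> bm"
  by (auto simp: bm_def Efield_def)

lemma polys_iff: "h \<in> polys \<longleftrightarrow> finite {\<alpha>. h \<alpha> \<noteq> 0}"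
  by (simp add: polys_def)

lemma polys_zero[simp]: "(\<lambda>_. 0) \<in> polys"
  by (simp add: polys_def)

lemma polys_mono[simp]: "mono \<gamma> v \<in> polys"
  by (rule polys_iff[THEN iffD2], rule finite_subset[of _ "{\<gamma>}"]) (auto simp: mono_def)

lemma polys_add: fixes f :: "_ \<Rightarrow> 'a::comm_monoid_add" shows "f \<in> polys \<Longrightarrow> g \<in> polys \<Longrightarrow> (\<lambda>\<alpha>. f \<alpha> + g \<alpha>) \<in> polys"
  unfolding polys_iff
  by (rule finite_subset[of _ "{\<alpha>. f \<alpha> \<noteq> 0} \<union> {\<alpha>. g \<alpha> \<noteq> 0}"]) auto

lemma polys_diff: fixes f :: "_ \<Rightarrow> 'a::ab_group_add" shows "f \<in> polys \<Longrightarrow> g \<in> polys \<Longrightarrow> (\<lambda>\<alpha>. f \<alpha> - g \<alpha>) \<in> polys"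
  unfolding polys_iff
  by (rule finite_subset[of _ "{\<alpha>. f \<alpha> \<noteq> 0} \<union> {\<alpha>. g \<alpha> \<noteq> 0}"]) auto

lemma polys_map: "f \<in> polys \<Longrightarrow> F 0 = 0 \<Longrightarrow> (\<lambda>\<alpha>. F (f \<alpha>)) \<in> polys"
  unfolding polys_iff
  by (rule finite_subset[of _ "{\<alpha>. f \<alpha> \<noteq> 0}"]) auto

lemma polys_sum: fixes F :: "_ \<Rightarrow> _ \<Rightarrow> 'a::comm_monoid_add" shows "finite A \<Longrightarrow> (\<And>x. x \<in> A \<Longrightarrow> F x \<in> polys) \<Longrightarrow> (\<lambda>\<alpha>. \<Sum>x\<in>A. F x \<alpha>) \<in> polys"
proof (induction A rule: finite_induct)
  case empty then show ?case by simp
next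
  case (insert a A)
  then show ?case by (simp add: polys_add)
qed

lemma inj_incr: "inj (\<lambda>\<alpha>::'m \<Rightarrow> nat. \<alpha>(j := \<alpha> j + 1))"
proof (rule injI)
  fix a b :: "'m \<Rightarrow> nat" assume e: "a(j := a j + 1) = b(j := b j + 1)"
  show "a = b"
  proof
    fix k show "a k = b k" using fun_cong[OF e, of k] by (cases "k = j") auto
  qed
qed

lemma polys_mulx: "g \<in> polys \<Longrightarrow> mulx i g \<in> polys"
proof -
  assume g: "g \<in> polys"
  have inj: "inj_on (\<lambda>\<alpha>::'a \<Rightarrow> nat. \<alpha>(i := \<alpha> i - 1)) {\<alpha>. 1 \<le> \<alpha> i}"
  proof (rule inj_onI)
    fix a b :: "'a \<Rightarrow> nat" assume a: "a \<in> {\<alpha>. 1 \<le> \<alpha> i}" and b: "b \<in> {\<alpha>. 1 \<le> \<alpha> i}"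
      and e: "a(i := a i - 1) = b(i := b i - 1)"
    show "a = b"
    proof
      fix k show "a k = b k" using fun_cong[OF e, of k] a b by (cases "k = i") auto
    qed
  qed
  have "finite ((\<lambda>\<alpha>. \<alpha>(i := \<alpha> i - 1)) -` {\<alpha>. g \<alpha> \<noteq> 0} \<inter> {\<alpha>. 1 \<le> \<alpha> i})"
    by (rule finite_vimage_IntI) (use g inj in \<open>auto simp: polys_iff\<close>)
  moreover have "{\<alpha>. mulx i g \<alpha> \<noteq> 0} \<subseteq> (\<lambda>\<alpha>. \<alpha>(i := \<alpha> i - 1)) -` {\<alpha>. g \<alpha> \<noteq> 0} \<inter> {\<alpha>. 1 \<le> \<alpha> i}"
  proof
    fix \<alpha> assume "\<alpha> \<in> {\<alpha>. mulx i g \<alpha> \<noteq> 0}"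
    then show "\<alpha> \<in> (\<lambda>\<alpha>. \<alpha>(i := \<alpha> i - 1)) -` {\<alpha>. g \<alpha> \<noteq> 0} \<inter> {\<alpha>. 1 \<le> \<alpha> i}"
      by (cases "1 \<le> \<alpha> i") (simp_all add: mulx_def)
  qed
  ultimately show ?thesis unfolding polys_iff by (rule finite_subset[rotated])
qed

context cvs

begin

lemma polys_scale: "f \<in> polys \<Longrightarrow> (\<lambda>\<alpha>. sc a (f \<alpha>)) \<in> polys"
  by (rule polys_map) auto

lemma polys_pder: "h \<in> polys \<Longrightarrow> pder sc j h \<in> polys"
proof -
  assume h: "h \<in> polys"
  have "finite ((\<lambda>\<alpha>. \<alpha>(j := \<alpha> j + 1)) -` {\<alpha>. h \<alpha> \<noteq> 0})"
    by (rule finite_vimageI) (use h inj_incr in \<open>auto simp: polys_iff\<close>)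
  then show ?thesis unfolding polys_iff
    by (rule finite_subset[rotated]) (auto simp: pder_def)
qed

lemma polys_Sx: "h \<in> polys \<Longrightarrow> Sx sc i j h \<in> polys"
  by (simp add: Sx_def polys_mulx polys_pder)

lemma polys_Lie:
  assumes X: "X \<in> bm" and h: "h \<in> polys" and \<phi>0: "\<And>i j. \<phi> i j 0 = 0"
  shows "Lie sc \<phi> X h \<in> polys"
  unfolding Lie_bm[OF X]
  apply (rule polys_add)
   apply (rule polys_sum, simp, rule polys_scale, rule polys_pder, rule h)
  apply (rule polys_sum, simp, rule polys_sum, simp, rule polys_scale, rule polys_add,
      rule polys_Sx, rule h, rule polys_map[OF h], rule \<phi>0)
  done

lemma Lie_dfield: "Lie sc \<phi> (dfield k) h = pder sc k h"
proof -
  have a: "sc (dfield k j (\<lambda>_. 0)) x = (if j = k then x else 0)" for j x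
    by (simp add: dfield_def)
  have b: "sc (dfield k j (ee i)) x = 0" for i j x
    by (simp add: dfield_def)
  show ?thesis by (simp only: Lie_bm[OF dfield_bm] a b sum.delta' sum.neutral_const) simp
qed

lemma Lie_xfield: "Lie sc \<phi> (xfield i j) h = (\<lambda>\<alpha>. Sx sc i j h \<alpha> + \<phi> i j (h \<alpha>))"
proof -
  have a: "sc (xfield i j j' (\<lambda>_. 0)) x = 0" for j' x
    by (simp add: xfield_def)
  have b: "sc (xfield i j j' (ee i')) x = (if j' = j then (if i' = i then x else 0) else 0)" for i' j' x
    by (simp add: xfield_def)
  show ?thesis by (simp only: Lie_bm[OF xfield_bm] a b sum.delta sum.neutral_const) simp
qed

lemma Lie_Efield:
  assumes "Ex_acts_by sc \<phi> c"
  shows "Lie sc \<phi> Efield h = (\<lambda>\<alpha>. sc (of_nat (deg \<alpha>) + c) (h \<alpha>))"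
proof
  fix \<alpha> :: "'a \<Rightarrow> nat"
  have S: "Sx sc i i h \<alpha> = sc (of_nat (\<alpha> i)) (h \<alpha>)" for i
  proof (cases "1 \<le> \<alpha> i")
    case True
    then have "(\<alpha>(i := \<alpha> i - 1))(i := \<alpha> i - 1 + 1) = \<alpha>" by (auto simp: fun_eq_iff)
    then show ?thesis using True by (simp add: Sx_def mulx_def pder_def of_nat_diff)
  next
    case False then show ?thesis by (simp add: Sx_def mulx_def)
  qed
  have a: "sc (Efield j (\<lambda>_. 0)) x = 0" for j x
    by (simp add: Efield_def)
  have b: "sc (Efield j (ee i)) x = (if j = i then x else 0)" for i j x
    by (simp add: Efield_def)
  have "Lie sc \<phi> Efield h \<alpha> = (\<Sum>i\<in>UNIV. Sx sc i i h \<alpha> + \<phi> i i (h \<alpha>))"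
    by (simp only: Lie_bm[OF Efield_bm] a b sum.delta sum.neutral_const) simp
  also have "\<dots> = (\<Sum>i\<in>UNIV. sc (of_nat (\<alpha> i)) (h \<alpha>)) + (\<Sum>i\<in>UNIV. \<phi> i i (h \<alpha>))"
    by (simp only: S sum.distrib)
  also have "(\<Sum>i\<in>UNIV. sc (of_nat (\<alpha> i)) (h \<alpha>)) = sc (of_nat (deg \<alpha>)) (h \<alpha>)"
    by (simp only: scale_sum_left[symmetric] deg_def of_nat_sum)
  also have "(\<Sum>i\<in>UNIV. \<phi> i i (h \<alpha>)) = sc c (h \<alpha>)"
    using assms by (simp add: Ex_acts_by_def)
  finally show "Lie sc \<phi> Efield h \<alpha> = sc (of_nat (deg \<alpha>) + c) (h \<alpha>)"
    by (simp add: scale_left_distrib)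
qed

end


lemma lin_facts:
  assumes "Vector_Spaces.linear s1 s2 f"
  shows "f (x + y) = f x + f y" "f (s1 a x) = s2 a (f x)" "f 0 = 0"
    "f (sum g S) = (\<Sum>a\<in>S. f (g a))" "f (x - y) = f x - f y"
proof -
  interpret Vector_Spaces.linear s1 s2 f by fact
  show "f (x + y) = f x + f y" by (rule add)
  show "f (s1 a x) = s2 a (f x)" by (rule scale)
  show "f 0 = 0" by (rule zero)
  show "f (sum g S) = (\<Sum>a\<in>S. f (g a))" by (rule sum)
  show "f (x - y) = f x - f y" by (rule diff)
qed

definition cf :: "('m::finite \<Rightarrow> nat) \<Rightarrow> ('m \<Rightarrow> nat) \<Rightarrow> complex" where
  "cf \<beta> \<gamma> = (\<Prod>k\<in>UNIV. of_nat (fact (\<beta> k + \<gamma> k)) / of_nat (fact (\<beta> k)))"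

definition upd :: "'m \<Rightarrow> 'm \<Rightarrow> ('m \<Rightarrow> nat) \<Rightarrow> ('m \<Rightarrow> nat)" where
  "upd i j \<gamma> = (\<gamma>(i := \<gamma> i - 1))(j := (\<gamma>(i := \<gamma> i - 1)) j + 1)"

lemma cf0: "cf (\<lambda>_. 0) \<gamma> = (\<Prod>k\<in>UNIV. of_nat (fact (\<gamma> k)))"
  by (simp add: cf_def)

lemma cf0_nz: "cf (\<lambda>_. 0) \<gamma> \<noteq> 0"
  by (simp add: cf0)

lemma cf_split: "cf \<beta> \<gamma> = of_nat (fact (\<beta> k + \<gamma> k)) / of_nat (fact (\<beta> k)) *
    (\<Prod>k'\<in>UNIV-{k}. of_nat (fact (\<beta> k' + \<gamma> k')) / of_nat (fact (\<beta> k')))"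
  by (simp add: cf_def prod.remove)

lemma cf_step: "cf \<beta> \<gamma> * of_nat (\<beta> k + \<gamma> k + 1) = of_nat (\<beta> k + 1) * cf (\<beta>(k := \<beta> k + 1)) \<gamma>"
proof -
  define R where "R = (\<Prod>k'\<in>UNIV-{k}. of_nat (fact (\<beta> k' + \<gamma> k')) / (of_nat (fact (\<beta> k')) :: complex))"
  have R2: "(\<Prod>k'\<in>UNIV-{k}. of_nat (fact ((\<beta>(k := \<beta> k + 1)) k' + \<gamma> k')) / of_nat (fact ((\<beta>(k := \<beta> k + 1)) k'))) = R"
    unfolding R_def by (rule prod.cong) auto
  have a: "of_nat (fact (b + g)) / of_nat (fact b) * of_nat (b + g + 1) =
      of_nat (b + 1) * (of_nat (fact (b + 1 + g)) / (of_nat (fact (b + 1)) :: complex))" for b g :: nat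
  proof -
    have f1: "(fact (b + 1 + g) :: complex) = of_nat (b + g + 1) * fact (b + g)"
      using fact_Suc[of "b + g"] by (simp add: add.commute add.left_commute)
    have f2: "(fact (b + 1) :: complex) = of_nat (b + 1) * fact b" by simp
    have nz: "(fact b :: complex) \<noteq> 0" "(of_nat (b + 1) :: complex) \<noteq> 0" by simp_all
    have aux: "(B::complex) \<noteq> 0 \<Longrightarrow> F / fb * N = B * (N * F / (B * fb))" for B F fb N
      by (cases "fb = 0") (simp_all add: field_simps)
    show ?thesis unfolding of_nat_fact f1 f2 by (rule aux) (rule nz(2))
  qed
  define a1 where "a1 = (of_nat (fact (\<beta> k + \<gamma> k)) / of_nat (fact (\<beta> k)) :: complex)"
  define a2 where "a2 = (of_nat (fact (\<beta> k + 1 + \<gamma> k)) / of_nat (fact (\<beta> k + 1)) :: complex)"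
  have c1: "cf \<beta> \<gamma> = a1 * R" unfolding a1_def R_def by (rule cf_split)
  have c2: "cf (\<beta>(k := \<beta> k + 1)) \<gamma> = a2 * R"
    using cf_split[of "\<beta>(k := \<beta> k + 1)" \<gamma> k] R2 unfolding a2_def by (simp only: fun_upd_same)
  have a': "a1 * of_nat (\<beta> k + \<gamma> k + 1) = of_nat (\<beta> k + 1) * a2"
    unfolding a1_def a2_def by (rule a)
  show ?thesis unfolding c1 c2 using a' by (metis mult.assoc mult.commute)
qed

lemma cf0_step: "cf (\<lambda>_. 0) (g(j := g j + 1)) = of_nat (g j + 1) * cf (\<lambda>_. 0) g"
proof -
  have "(\<Prod>k\<in>UNIV-{j}. (of_nat (fact ((g(j := g j + 1)) k)) :: complex)) = (\<Prod>k\<in>UNIV-{j}. of_nat (fact (g k)))"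
    by (rule prod.cong) auto
  then show ?thesis
    by (simp add: cf0 prod.remove[of UNIV j] algebra_simps)
qed

lemma cf0_upd:
  assumes "1 \<le> \<gamma> i"
  shows "cf (\<lambda>_. 0) \<gamma> * of_nat ((\<gamma>(i := \<gamma> i - 1)) j + 1) = of_nat (\<gamma> i) * cf (\<lambda>_. 0) (upd i j \<gamma>)"
proof -
  define g where "g = \<gamma>(i := \<gamma> i - 1)"
  have "\<gamma> = g(i := g i + 1)" using assms by (auto simp: g_def fun_eq_iff)
  then have A: "cf (\<lambda>_. 0) \<gamma> = of_nat (\<gamma> i) * cf (\<lambda>_. 0) g"
    using cf0_step[of g i] assms by (simp add: g_def)
  have B: "cf (\<lambda>_. 0) (upd i j \<gamma>) = of_nat (g j + 1) * cf (\<lambda>_. 0) g"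
    using cf0_step[of g j] by (simp add: upd_def g_def)
  show ?thesis using A B by (simp add: g_def)
qed

lemma deg_updij:
  assumes "1 \<le> (\<gamma>::'m::finite \<Rightarrow> nat) i"
  shows "deg (upd i j \<gamma>) = deg \<gamma>"
proof -
  have "deg (\<gamma>(i := \<gamma> i - 1)) + \<gamma> i = deg \<gamma> + (\<gamma> i - 1)" by (rule deg_upd)
  then have "deg (\<gamma>(i := \<gamma> i - 1)) + 1 = deg \<gamma>" using assms by simp
  then show ?thesis unfolding upd_def using deg_upd_Suc[of "\<gamma>(i := \<gamma> i - 1)" j] by simp
qed

lemma dact_upd: "dact i j \<gamma> \<delta> = (if 1 \<le> \<gamma> i \<and> \<delta> = upd i j \<gamma> then - of_nat (\<gamma> i) else 0)"
  by (simp add: dact_def upd_def)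


definition Phi0 :: "(complex \<Rightarrow> 'v::ab_group_add \<Rightarrow> 'v) \<Rightarrow> nat \<Rightarrow> (('m::finite \<Rightarrow> nat) \<Rightarrow> 'v \<Rightarrow> 'w::ab_group_add) \<Rightarrow>
    (('m \<Rightarrow> nat) \<Rightarrow> 'v) \<Rightarrow> (('m \<Rightarrow> nat) \<Rightarrow> 'w)" where
  "Phi0 scV n \<tau> h = (\<lambda>\<beta>. \<Sum>\<gamma>\<in>{\<gamma>. deg \<gamma> = n}. \<tau> \<gamma> (scV (cf \<beta> \<gamma>) (h (\<lambda>k. \<beta> k + \<gamma> k))))"

locale pair = V: cvs scV + W: cvs scW
  for scV :: "complex \<Rightarrow> 'v::ab_group_add \<Rightarrow> 'v" and scW :: "complex \<Rightarrow> 'w::ab_group_add \<Rightarrow> 'w"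
begin

lemma Phi0_add:
  assumes L: "\<And>\<gamma>. Vector_Spaces.linear scV scW (\<tau> \<gamma>)"
  shows "Phi0 scV n \<tau> (\<lambda>\<alpha>. f \<alpha> + g \<alpha>) = (\<lambda>\<beta>. Phi0 scV n \<tau> f \<beta> + Phi0 scV n \<tau> g \<beta>)"
  by (simp add: Phi0_def V.scale_right_distrib lin_facts[OF L] sum.distrib)

lemma Phi0_diff:
  assumes L: "\<And>\<gamma>. Vector_Spaces.linear scV scW (\<tau> \<gamma>)"
  shows "Phi0 scV n \<tau> (\<lambda>\<alpha>. f \<alpha> - g \<alpha>) = (\<lambda>\<beta>. Phi0 scV n \<tau> f \<beta> - Phi0 scV n \<tau> g \<beta>)"
  by (simp add: Phi0_def V.scale_right_diff_distrib lin_facts[OF L] sum_subtractf)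

lemma Phi0_scale:
  assumes L: "\<And>\<gamma>. Vector_Spaces.linear scV scW (\<tau> \<gamma>)"
  shows "Phi0 scV n \<tau> (\<lambda>\<alpha>. scV a (f \<alpha>)) = (\<lambda>\<beta>. scW a (Phi0 scV n \<tau> f \<beta>))"
  by (simp add: Phi0_def lin_facts[OF L] W.scale_sum_right mult.commute)

lemma Phi0_sum:
  assumes L: "\<And>\<gamma>. Vector_Spaces.linear scV scW (\<tau> \<gamma>)"
  shows "Phi0 scV n \<tau> (\<lambda>\<alpha>. \<Sum>x\<in>A. F x \<alpha>) = (\<lambda>\<beta>. \<Sum>x\<in>A. Phi0 scV n \<tau> (F x) \<beta>)"
  by (simp add: Phi0_def V.scale_sum_right lin_facts[OF L] sum.swap[of _ A])

lemma Phi0_map: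
  assumes L: "\<And>\<gamma>. Vector_Spaces.linear scV scW (\<tau> \<gamma>)"
    and LV: "Vector_Spaces.linear scV scV f" and LW: "Vector_Spaces.linear scW scW g"
    and C: "\<And>\<gamma> u. \<tau> \<gamma> (f u) = g (\<tau> \<gamma> u)"
  shows "Phi0 scV n \<tau> (\<lambda>\<alpha>. f (h \<alpha>)) = (\<lambda>\<beta>. g (Phi0 scV n \<tau> h \<beta>))"
  by (simp add: Phi0_def lin_facts[OF LV] lin_facts[OF LW] C[symmetric])

lemma Phi0_zero:
  assumes L: "\<And>\<gamma>. Vector_Spaces.linear scV scW (\<tau> \<gamma>)"
  shows "Phi0 scV n \<tau> (\<lambda>_. 0) = (\<lambda>_. 0)"
  by (simp add: Phi0_def lin_facts[OF L])

lemma Phi0_at0: "Phi0 scV n \<tau> h (\<lambda>_. 0) = (\<Sum>\<gamma>\<in>{\<gamma>. deg \<gamma> = n}. \<tau> \<gamma> (scV (cf (\<lambda>_. 0) \<gamma>) (h \<gamma>)))"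
  by (simp add: Phi0_def)

lemma Phi0_pder:
  assumes L: "\<And>\<gamma>. Vector_Spaces.linear scV scW (\<tau> \<gamma>)"
  shows "Phi0 scV n \<tau> (pder scV k h) = pder scW k (Phi0 scV n \<tau> h)"
proof
  fix \<beta> :: "'a \<Rightarrow> nat"
  have "\<tau> \<gamma> (scV (cf \<beta> \<gamma>) (pder scV k h (\<lambda>k. \<beta> k + \<gamma> k))) =
      scW (of_nat (\<beta> k + 1)) (\<tau> \<gamma> (scV (cf (\<beta>(k := \<beta> k + 1)) \<gamma>) (h (\<lambda>ka. (\<beta>(k := \<beta> k + 1)) ka + \<gamma> ka))))" for \<gamma>
  proof -
    have e: "(\<lambda>ka. (\<beta>(k := \<beta> k + 1)) ka + \<gamma> ka) = (\<lambda>k. \<beta> k + \<gamma> k)(k := \<beta> k + \<gamma> k + 1)"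
      by (auto simp: fun_eq_iff)
    have "\<tau> \<gamma> (scV (cf \<beta> \<gamma>) (pder scV k h (\<lambda>k. \<beta> k + \<gamma> k))) =
        \<tau> \<gamma> (scV (cf \<beta> \<gamma> * of_nat (\<beta> k + \<gamma> k + 1)) (h ((\<lambda>k. \<beta> k + \<gamma> k)(k := \<beta> k + \<gamma> k + 1))))"
      by (simp only: pder_def V.scale_scale)
    also have "\<dots> = \<tau> \<gamma> (scV (of_nat (\<beta> k + 1) * cf (\<beta>(k := \<beta> k + 1)) \<gamma>) (h (\<lambda>ka. (\<beta>(k := \<beta> k + 1)) ka + \<gamma> ka)))"
      by (simp only: cf_step e)
    also have "\<dots> = scW (of_nat (\<beta> k + 1)) (\<tau> \<gamma> (scV (cf (\<beta>(k := \<beta> k + 1)) \<gamma>) (h (\<lambda>ka. (\<beta>(k := \<beta> k + 1)) ka + \<gamma> ka))))"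
      by (simp only: V.scale_scale[symmetric] lin_facts(2)[OF L])
    finally show ?thesis .
  qed
  then show "Phi0 scV n \<tau> (pder scV k h) \<beta> = pder scW k (Phi0 scV n \<tau> h) \<beta>"
    by (simp add: Phi0_def pder_def W.scale_sum_right)
qed

end


context pair
begin

lemma polys_Phi0:
  assumes L: "\<And>\<gamma>. Vector_Spaces.linear scV scW (\<tau> \<gamma>)" and h: "h \<in> polys"
  shows "Phi0 scV n \<tau> h \<in> polys"
proof -
  define A where "A = {\<alpha>. h \<alpha> \<noteq> 0}"
  have fA: "finite A" using h unfolding A_def polys_iff .
  have "{\<beta>. Phi0 scV n \<tau> h \<beta> \<noteq> 0} \<subseteq> (\<Union>\<alpha>\<in>A. {\<beta>. \<beta> \<le> \<alpha>})"
  proof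
    fix \<beta> assume "\<beta> \<in> {\<beta>. Phi0 scV n \<tau> h \<beta> \<noteq> 0}"
    then have "(\<Sum>\<gamma>\<in>{\<gamma>. deg \<gamma> = n}. \<tau> \<gamma> (scV (cf \<beta> \<gamma>) (h (\<lambda>k. \<beta> k + \<gamma> k)))) \<noteq> 0"
      unfolding Phi0_def by simp
    then obtain \<gamma> where g: "\<tau> \<gamma> (scV (cf \<beta> \<gamma>) (h (\<lambda>k. \<beta> k + \<gamma> k))) \<noteq> 0"
      by (rule sum.not_neutral_contains_not_neutral)
    have "h (\<lambda>k. \<beta> k + \<gamma> k) \<noteq> 0"
    proof
      assume "h (\<lambda>k. \<beta> k + \<gamma> k) = 0"
      then have "\<tau> \<gamma> (scV (cf \<beta> \<gamma>) (h (\<lambda>k. \<beta> k + \<gamma> k))) = 0"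
        using lin_facts(3)[OF L] by (simp only: V.scale_zero_right)
      then show False using g by contradiction
    qed
    then have "(\<lambda>k. \<beta> k + \<gamma> k) \<in> A" unfolding A_def by simp
    moreover have "\<beta> \<le> (\<lambda>k. \<beta> k + \<gamma> k)" by (simp add: le_fun_def)
    ultimately show "\<beta> \<in> (\<Union>\<alpha>\<in>A. {\<beta>. \<beta> \<le> \<alpha>})" by blast
  qed
  moreover have "finite (\<Union>\<alpha>\<in>A. {\<beta>. \<beta> \<le> \<alpha>})" using fA finite_le by blast
  ultimately show ?thesis unfolding polys_iff by (rule finite_subset)
qed

lemma vanish:
  fixes D :: "(('m::finite \<Rightarrow> nat) \<Rightarrow> 'v) \<Rightarrow> (('m \<Rightarrow> nat) \<Rightarrow> 'w)"
  assumes D0: "\<And>h. P h \<Longrightarrow> D h (\<lambda>_. 0) = 0"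
    and Pd: "\<And>h k. P h \<Longrightarrow> P (pder scV k h)"
    and Dd: "\<And>h k. P h \<Longrightarrow> pder scW k (D h) = D (pder scV k h)"
  shows "P h \<Longrightarrow> D h \<beta> = 0"
proof (induction "deg \<beta>" arbitrary: \<beta> h rule: less_induct)
  case less
  show ?case
  proof (cases "\<beta> = (\<lambda>_. 0)")
    case True then show ?thesis using D0 less.prems by simp
  next
    case False
    then obtain k where k: "\<beta> k \<noteq> 0" by auto
    define \<beta>' where "\<beta>' = \<beta>(k := \<beta> k - 1)"
    have b: "\<beta> = \<beta>'(k := \<beta>' k + 1)" using k by (auto simp: \<beta>'_def fun_eq_iff)
    have b': "\<beta>'(k := Suc (\<beta>' k)) = \<beta>" using b by simp
    have "deg \<beta> = deg \<beta>' + 1" using b deg_upd_Suc[of \<beta>' k] by simp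
    then have lt: "deg \<beta>' < deg \<beta>" by simp
    have "pder scW k (D h) \<beta>' = scW (of_nat (\<beta>' k + 1)) (D h \<beta>)"
      by (simp add: pder_def b')
    moreover have "pder scW k (D h) \<beta>' = 0"
      using Dd[OF less.prems] less.hyps[OF lt Pd[OF less.prems]] by simp
    ultimately have "scW (of_nat (\<beta>' k + 1)) (D h \<beta>) = 0" by simp
    moreover have "(of_nat (\<beta>' k + 1) :: complex) \<noteq> 0" by (simp only: of_nat_eq_0_iff)
    ultimately show ?thesis by simp
  qed
qed

definition Inv :: "nat \<Rightarrow> ('m::finite \<Rightarrow> 'm \<Rightarrow> 'v \<Rightarrow> 'v) \<Rightarrow> ('m \<Rightarrow> 'm \<Rightarrow> 'w \<Rightarrow> 'w) \<Rightarrow>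
   (('m \<Rightarrow> nat) \<Rightarrow> 'v \<Rightarrow> 'w) \<Rightarrow> 'm \<Rightarrow> 'm \<Rightarrow> ('m \<Rightarrow> nat) \<Rightarrow> 'v \<Rightarrow> 'w" where
  "Inv n \<phi> \<psi> \<tau> i j \<delta> u = (\<Sum>\<gamma>\<in>{\<gamma>. deg \<gamma> = n}. scW (dact i j \<gamma> \<delta>) (\<tau> \<gamma> u)) + \<psi> i j (\<tau> \<delta> u) - \<tau> \<delta> (\<phi> i j u)"

lemma key_identity:
  assumes L: "\<And>\<gamma>. Vector_Spaces.linear scV scW (\<tau> \<gamma>)"
    and LV: "Vector_Spaces.linear scV scV (\<phi> i j)" and LW: "Vector_Spaces.linear scW scW (\<psi> i j)"
  shows "Phi0 scV n \<tau> (\<lambda>\<alpha>. Sx scV i j h \<alpha> + \<phi> i j (h \<alpha>)) (\<lambda>_. 0) - \<psi> i j (Phi0 scV n \<tau> h (\<lambda>_. 0)) =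
    - (\<Sum>\<delta>\<in>{\<gamma>. deg \<gamma> = n}. Inv n \<phi> \<psi> \<tau> i j \<delta> (scV (cf (\<lambda>_. 0) \<delta>) (h \<delta>)))"
proof -
  define G where "G = {\<gamma>::'a \<Rightarrow> nat. deg \<gamma> = n}"
  define u where "u \<delta> = scV (cf (\<lambda>_. 0) \<delta>) (h \<delta>)" for \<delta>
  have fG: "finite G" by (simp add: G_def finite_deg)
  define A where "A = (\<Sum>\<gamma>\<in>G. \<tau> \<gamma> (scV (cf (\<lambda>_. 0) \<gamma>) (Sx scV i j h \<gamma>)))"
  define A' where "A' = (\<Sum>\<delta>\<in>G. \<Sum>\<gamma>\<in>G. scW (dact i j \<gamma> \<delta>) (\<tau> \<gamma> (u \<delta>)))"
  define B where "B = (\<Sum>\<gamma>\<in>G. \<tau> \<gamma> (\<phi> i j (u \<gamma>)))"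
  define C where "C = (\<Sum>\<gamma>\<in>G. \<psi> i j (\<tau> \<gamma> (u \<gamma>)))"
  have lhs: "Phi0 scV n \<tau> (\<lambda>\<alpha>. Sx scV i j h \<alpha> + \<phi> i j (h \<alpha>)) (\<lambda>_. 0) - \<psi> i j (Phi0 scV n \<tau> h (\<lambda>_. 0))
      = A + B - C"
    by (simp add: Phi0_at0 A_def B_def C_def u_def G_def[symmetric] V.scale_right_distrib
        lin_facts[OF L] lin_facts[OF LV] lin_facts[OF LW] sum.distrib)
  have rhs: "(\<Sum>\<delta>\<in>G. Inv n \<phi> \<psi> \<tau> i j \<delta> (u \<delta>)) = A' + C - B"
    by (simp add: Inv_def A'_def B_def C_def G_def[symmetric] sum.distrib sum_subtractf)
  have AA: "A = - A'"
  proof -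
    have "A' = (\<Sum>\<gamma>\<in>G. \<Sum>\<delta>\<in>G. scW (dact i j \<gamma> \<delta>) (\<tau> \<gamma> (u \<delta>)))"
      unfolding A'_def by (rule sum.swap)
    also have "\<dots> = (\<Sum>\<gamma>\<in>G. - \<tau> \<gamma> (scV (cf (\<lambda>_. 0) \<gamma>) (Sx scV i j h \<gamma>)))"
    proof (rule sum.cong[OF refl])
      fix \<gamma> assume g: "\<gamma> \<in> G"
      show "(\<Sum>\<delta>\<in>G. scW (dact i j \<gamma> \<delta>) (\<tau> \<gamma> (u \<delta>))) = - \<tau> \<gamma> (scV (cf (\<lambda>_. 0) \<gamma>) (Sx scV i j h \<gamma>))"
      proof (cases "1 \<le> \<gamma> i")
        case False
        then show ?thesis by (simp add: dact_upd Sx_def mulx_def lin_facts[OF L])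
      next
        case True
        have UG: "upd i j \<gamma> \<in> G" using g deg_updij[of \<gamma> i j, OF True] by (simp add: G_def)
        have "(\<Sum>\<delta>\<in>G. scW (dact i j \<gamma> \<delta>) (\<tau> \<gamma> (u \<delta>))) =
            (\<Sum>\<delta>\<in>G. if \<delta> = upd i j \<gamma> then scW (- of_nat (\<gamma> i)) (\<tau> \<gamma> (u \<delta>)) else 0)"
          by (rule sum.cong[OF refl]) (simp add: dact_upd True)
        also have "\<dots> = scW (- of_nat (\<gamma> i)) (\<tau> \<gamma> (u (upd i j \<gamma>)))"
          using UG fG by simp
        also have "\<dots> = - \<tau> \<gamma> (scV (cf (\<lambda>_. 0) \<gamma>) (Sx scV i j h \<gamma>))"
        proof -
          have "Sx scV i j h \<gamma> = scV (of_nat ((\<gamma>(i := \<gamma> i - 1)) j + 1)) (h (upd i j \<gamma>))"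
            using True by (simp add: Sx_def mulx_def pder_def upd_def)
          then have "scV (cf (\<lambda>_. 0) \<gamma>) (Sx scV i j h \<gamma>) = scV (of_nat (\<gamma> i)) (u (upd i j \<gamma>))"
            using cf0_upd[of \<gamma> i j, OF True] by (simp add: u_def mult.commute)
          then show ?thesis by (simp add: lin_facts[OF L])
        qed
        finally show ?thesis .
      qed
    qed
    also have "\<dots> = - A" by (simp add: A_def sum_negf)
    finally show ?thesis by simp
  qed
  show ?thesis
    unfolding lhs u_def[symmetric] G_def[symmetric] rhs AA by (simp add: algebra_simps)
qed

end


context pair
begin

lemma Sx_at0: "Sx sc i j g (\<lambda>_. 0) = 0"
  by (simp add: Sx_def mulx_def)

lemma Phi0_xd:
  assumes L: "\<And>\<gamma>. Vector_Spaces.linear scV scW (\<tau> \<gamma>)"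
    and LV: "Vector_Spaces.linear scV scV (\<phi> i j)" and LW: "Vector_Spaces.linear scW scW (\<psi> i j)"
    and I: "\<And>\<delta> u. Inv n \<phi> \<psi> \<tau> i j \<delta> u = 0"
  shows "Phi0 scV n \<tau> (\<lambda>\<alpha>. Sx scV i j h \<alpha> + \<phi> i j (h \<alpha>)) =
         (\<lambda>\<alpha>. Sx scW i j (Phi0 scV n \<tau> h) \<alpha> + \<psi> i j (Phi0 scV n \<tau> h \<alpha>))"
proof -
  define D where "D h = (\<lambda>\<alpha>. Phi0 scV n \<tau> (\<lambda>\<alpha>. Sx scV i j h \<alpha> + \<phi> i j (h \<alpha>)) \<alpha> -
      (Sx scW i j (Phi0 scV n \<tau> h) \<alpha> + \<psi> i j (Phi0 scV n \<tau> h \<alpha>)))" for h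
  have D0: "D h (\<lambda>_. 0) = 0" for h
  proof -
    have "D h (\<lambda>_. 0) = Phi0 scV n \<tau> (\<lambda>\<alpha>. Sx scV i j h \<alpha> + \<phi> i j (h \<alpha>)) (\<lambda>_. 0) - \<psi> i j (Phi0 scV n \<tau> h (\<lambda>_. 0))"
      by (simp add: D_def Sx_at0)
    also have "\<dots> = - (\<Sum>\<delta>\<in>{\<gamma>. deg \<gamma> = n}. Inv n \<phi> \<psi> \<tau> i j \<delta> (scV (cf (\<lambda>_. 0) \<delta>) (h \<delta>)))"
      by (rule key_identity[of \<tau> \<phi> i j \<psi>, OF L LV LW])
    also have "\<dots> = 0" by (simp add: I)
    finally show ?thesis .
  qed
  have Dd: "pder scW k (D h) = D (pder scV k h)" for h k
  proof -
    define G where "G = Phi0 scV n \<tau> h"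
    have pG: "pder scW k G = Phi0 scV n \<tau> (pder scV k h)" by (simp add: G_def Phi0_pder[OF L])
    have P1: "pder scW k (Phi0 scV n \<tau> (\<lambda>\<alpha>. Sx scV i j h \<alpha> + \<phi> i j (h \<alpha>))) =
       Phi0 scV n \<tau> (\<lambda>\<alpha>. (Sx scV i j (pder scV k h) \<alpha> + \<phi> i j (pder scV k h \<alpha>)) + (if k = i then pder scV j h \<alpha> else 0))"
      by (simp add: Phi0_pder[OF L, symmetric] V.pder_add V.Sx_pder V.pder_lin[OF LV] add_ac)
    have P2: "pder scW k (\<lambda>\<alpha>. Sx scW i j G \<alpha> + \<psi> i j (G \<alpha>)) =
       (\<lambda>\<alpha>. (Sx scW i j (pder scW k G) \<alpha> + \<psi> i j (pder scW k G \<alpha>)) + (if k = i then pder scW j G \<alpha> else 0))"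
      by (simp add: W.pder_add W.Sx_pder W.pder_lin[OF LW] add_ac)
    have P3: "Phi0 scV n \<tau> (\<lambda>\<alpha>. (Sx scV i j (pder scV k h) \<alpha> + \<phi> i j (pder scV k h \<alpha>)) + (if k = i then pder scV j h \<alpha> else 0))
        = (\<lambda>\<alpha>. Phi0 scV n \<tau> (\<lambda>\<alpha>. Sx scV i j (pder scV k h) \<alpha> + \<phi> i j (pder scV k h \<alpha>)) \<alpha> + (if k = i then pder scW j G \<alpha> else 0))"
    proof (cases "k = i")
      case True
      then show ?thesis by (simp add: Phi0_add[OF L] G_def Phi0_pder[OF L])
    next
      case False
      then show ?thesis by simp
    qed
    show ?thesis
      unfolding D_def W.pder_diff P1 P2[unfolded G_def] P3[unfolded G_def] pG[unfolded G_def]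
      by (simp add: G_def algebra_simps)
  qed
  have "D h \<beta> = 0" for \<beta>
    by (rule vanish[where P="\<lambda>_. True"]) (use D0 Dd in auto)
  then show ?thesis by (auto simp: D_def fun_eq_iff)
qed

end


definition Psi :: "(complex \<Rightarrow> 'v::ab_group_add \<Rightarrow> 'v) \<Rightarrow> nat \<Rightarrow> ((('m::finite \<Rightarrow> nat) \<Rightarrow> 'v) \<Rightarrow> (('m \<Rightarrow> nat) \<Rightarrow> 'w::ab_group_add))
   \<Rightarrow> (('m \<Rightarrow> nat) \<Rightarrow> 'v \<Rightarrow> 'w)" where
  "Psi scV n T = (\<lambda>\<gamma> v. if deg \<gamma> = n then T (mono \<gamma> (scV (1 / cf (\<lambda>_. 0) \<gamma>) v)) (\<lambda>_. 0) else 0)"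

definition Phi :: "(complex \<Rightarrow> 'v::ab_group_add \<Rightarrow> 'v) \<Rightarrow> nat \<Rightarrow> (('m::finite \<Rightarrow> nat) \<Rightarrow> 'v \<Rightarrow> 'w::ab_group_add)
   \<Rightarrow> ((('m \<Rightarrow> nat) \<Rightarrow> 'v) \<Rightarrow> (('m \<Rightarrow> nat) \<Rightarrow> 'w))" where
  "Phi scV n \<tau> = (\<lambda>h. if h \<in> polys then Phi0 scV n \<tau> h else (\<lambda>_. 0))"

locale setting = pair scV scW
  for scV :: "complex \<Rightarrow> 'v::ab_group_add \<Rightarrow> 'v" and scW :: "complex \<Rightarrow> 'w::ab_group_add \<Rightarrow> 'w" +
  fixes \<phi> :: "'m::finite \<Rightarrow> 'm \<Rightarrow> 'v \<Rightarrow> 'v" and \<psi> :: "'m \<Rightarrow> 'm \<Rightarrow> 'w \<Rightarrow> 'w" and c c' :: complex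
  assumes \<phi>lin: "\<And>i j. Vector_Spaces.linear scV scV (\<phi> i j)"
    and \<psi>lin: "\<And>i j. Vector_Spaces.linear scW scW (\<psi> i j)"
    and Ec: "Ex_acts_by scV \<phi> c" and Ec': "Ex_acts_by scW \<psi> c'"
begin

abbreviation "HB \<equiv> HomB scV \<phi> scW \<psi>"

lemma InvT_iff: "\<tau> \<in> InvT scV \<phi> scW \<psi> n \<longleftrightarrow>
   (\<forall>\<gamma>. Vector_Spaces.linear scV scW (\<tau> \<gamma>)) \<and> (\<forall>\<gamma>. deg \<gamma> \<noteq> n \<longrightarrow> \<tau> \<gamma> = (\<lambda>_. 0)) \<and>
   (\<forall>i j \<delta> u. Inv n \<phi> \<psi> \<tau> i j \<delta> u = 0)"
  by (simp add: InvT_def Inv_def)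

lemma \<phi>0: "\<phi> i j 0 = 0" using lin_facts(3)[OF \<phi>lin] .
lemma \<psi>0: "\<psi> i j 0 = 0" using lin_facts(3)[OF \<psi>lin] .

context
  fixes T assumes T: "T \<in> HB"
begin

lemma hb_polys: "h \<in> polys \<Longrightarrow> T h \<in> polys" using T by (simp add: HomB_def)
lemma hb_out: "h \<notin> polys \<Longrightarrow> T h = (\<lambda>_. 0)" using T by (simp add: HomB_def)
lemma hb_add: "h \<in> polys \<Longrightarrow> g \<in> polys \<Longrightarrow> T (\<lambda>\<alpha>. h \<alpha> + g \<alpha>) = (\<lambda>\<alpha>. T h \<alpha> + T g \<alpha>)"
  using T by (simp add: HomB_def)
lemma hb_scale: "h \<in> polys \<Longrightarrow> T (\<lambda>\<alpha>. scV a (h \<alpha>)) = (\<lambda>\<alpha>. scW a (T h \<alpha>))"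
  using T by (simp add: HomB_def)
lemma hb_Lie: "X \<in> bm \<Longrightarrow> h \<in> polys \<Longrightarrow> T (Lie scV \<phi> X h) = Lie scW \<psi> X (T h)"
  using T by (simp add: HomB_def)

lemma hb_zero: "T (\<lambda>_. 0) = (\<lambda>_. 0)"
  using hb_scale[of "\<lambda>_. 0" 0] by simp

lemma hb_pder: "h \<in> polys \<Longrightarrow> T (pder scV k h) = pder scW k (T h)"
  using hb_Lie[OF dfield_bm, of h k] by (simp add: V.Lie_dfield W.Lie_dfield)

lemma hb_xd: "h \<in> polys \<Longrightarrow> T (\<lambda>\<alpha>. Sx scV i j h \<alpha> + \<phi> i j (h \<alpha>)) = (\<lambda>\<alpha>. Sx scW i j (T h) \<alpha> + \<psi> i j (T h \<alpha>))"
  using hb_Lie[OF xfield_bm, of h i j] by (simp add: V.Lie_xfield W.Lie_xfield)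

lemma hb_sum_monos: "finite A \<Longrightarrow> T (\<lambda>\<alpha>. \<Sum>\<gamma>\<in>A. mono \<gamma> (F \<gamma>) \<alpha>) = (\<lambda>\<alpha>. \<Sum>\<gamma>\<in>A. T (mono \<gamma> (F \<gamma>)) \<alpha>)"
proof (induction A rule: finite_induct)
  case empty then show ?case by (simp add: hb_zero)
next
  case (insert a A)
  have p: "(\<lambda>\<alpha>. \<Sum>\<gamma>\<in>A. mono \<gamma> (F \<gamma>) \<alpha>) \<in> polys" by (rule polys_sum) (use insert in auto)
  have "T (\<lambda>\<alpha>. \<Sum>\<gamma>\<in>insert a A. mono \<gamma> (F \<gamma>) \<alpha>) = T (\<lambda>\<alpha>. mono a (F a) \<alpha> + (\<Sum>\<gamma>\<in>A. mono \<gamma> (F \<gamma>) \<alpha>))"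
    using insert by simp
  also have "\<dots> = (\<lambda>\<alpha>. T (mono a (F a)) \<alpha> + T (\<lambda>\<alpha>. \<Sum>\<gamma>\<in>A. mono \<gamma> (F \<gamma>) \<alpha>) \<alpha>)"
    by (rule hb_add[OF polys_mono p])
  finally show ?case using insert by simp
qed

lemma hb_at0: "h \<in> polys \<Longrightarrow> T h (\<lambda>_. 0) = (\<Sum>\<gamma>\<in>{\<gamma>. h \<gamma> \<noteq> 0}. T (mono \<gamma> (h \<gamma>)) (\<lambda>_. 0))"
proof -
  assume h: "h \<in> polys"
  define S where "S = {\<gamma>. h \<gamma> \<noteq> 0}"
  have fS: "finite S" using h by (simp add: S_def polys_iff)
  have "h = (\<lambda>\<alpha>. \<Sum>\<gamma>\<in>S. mono \<gamma> (h \<gamma>) \<alpha>)"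
  proof
    fix \<alpha>
    have "(\<Sum>\<gamma>\<in>S. mono \<gamma> (h \<gamma>) \<alpha>) = (\<Sum>\<gamma>\<in>S. if \<alpha> = \<gamma> then h \<alpha> else 0)"
      by (rule sum.cong) (auto simp: mono_def)
    also have "\<dots> = h \<alpha>" using fS by (simp add: S_def)
    finally show "h \<alpha> = (\<Sum>\<gamma>\<in>S. mono \<gamma> (h \<gamma>) \<alpha>)" by simp
  qed
  then have "T h = (\<lambda>\<alpha>. \<Sum>\<gamma>\<in>S. T (mono \<gamma> (h \<gamma>)) \<alpha>)"
    using hb_sum_monos[OF fS, of h] by simp
  then show ?thesis by (simp add: S_def)
qed

lemma hb_grading:
  assumes "of_nat (deg \<gamma>) + c \<noteq> c'"
  shows "T (mono \<gamma> v) (\<lambda>_. 0) = 0"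
proof -
  have "Lie scV \<phi> Efield (mono \<gamma> v) = (\<lambda>\<alpha>. scV (of_nat (deg \<gamma>) + c) (mono \<gamma> v \<alpha>))"
  proof
    fix \<alpha> show "Lie scV \<phi> Efield (mono \<gamma> v) \<alpha> = scV (of_nat (deg \<gamma>) + c) (mono \<gamma> v \<alpha>)"
      by (cases "\<alpha> = \<gamma>") (simp_all add: V.Lie_Efield[OF Ec] mono_def)
  qed
  then have "T (Lie scV \<phi> Efield (mono \<gamma> v)) = (\<lambda>\<alpha>. scW (of_nat (deg \<gamma>) + c) (T (mono \<gamma> v) \<alpha>))"
    using hb_scale[OF polys_mono] by simp
  moreover have "T (Lie scV \<phi> Efield (mono \<gamma> v)) = (\<lambda>\<alpha>. scW (of_nat (deg \<alpha>) + c') (T (mono \<gamma> v) \<alpha>))"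
    using hb_Lie[OF Efield_bm polys_mono] W.Lie_Efield[OF Ec'] by simp
  ultimately have e: "(\<lambda>\<alpha>. scW (of_nat (deg \<gamma>) + c) (T (mono \<gamma> v) \<alpha>)) = (\<lambda>\<alpha>. scW (of_nat (deg \<alpha>) + c') (T (mono \<gamma> v) \<alpha>))"
    by (rule trans[OF sym])
  have "scW (of_nat (deg \<gamma>) + c) (T (mono \<gamma> v) (\<lambda>_. 0)) = scW (of_nat (deg (\<lambda>_::'m. 0::nat)) + c') (T (mono \<gamma> v) (\<lambda>_. 0))"
    using fun_cong[OF e, of "\<lambda>_. 0"] .
  then have "scW (of_nat (deg \<gamma>) + c) (T (mono \<gamma> v) (\<lambda>_. 0)) = scW c' (T (mono \<gamma> v) (\<lambda>_. 0))"
    by (simp only: deg_zero of_nat_0 add_0)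
  then have "scW (of_nat (deg \<gamma>) + c - c') (T (mono \<gamma> v) (\<lambda>_. 0)) = 0"
    by (simp add: W.scale_left_diff_distrib)
  then show ?thesis using assms by simp
qed

end

end


context setting
begin

lemma mono_add: fixes x :: "'a::comm_monoid_add" shows "mono \<gamma> (x + y) = (\<lambda>\<alpha>. mono \<gamma> x \<alpha> + mono \<gamma> y \<alpha>)"
  by (rule ext) (simp add: mono_def)

lemma mono_scaleV: "mono \<gamma> (scV a x) = (\<lambda>\<alpha>. scV a (mono \<gamma> x \<alpha>))"
  by (rule ext) (simp add: mono_def)

lemma Psi_lin:
  assumes T: "T \<in> HB"
  shows "Vector_Spaces.linear scV scW (Psi scV n T \<gamma>)"
proof (cases "deg \<gamma> = n")
  case True
  define a where "a = 1 / cf (\<lambda>_. 0) \<gamma>"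
  have P: "Psi scV n T \<gamma> = (\<lambda>v. T (mono \<gamma> (scV a v)) (\<lambda>_. 0))"
    by (simp add: Psi_def True a_def)
  show ?thesis unfolding P Vector_Spaces.linear_iff
  proof (intro conjI allI)
    show "vector_space scV" by (rule V.vs)
    show "vector_space scW" by (rule W.vs)
    fix x y
    show "T (mono \<gamma> (scV a (x + y))) (\<lambda>_. 0) = T (mono \<gamma> (scV a x)) (\<lambda>_. 0) + T (mono \<gamma> (scV a y)) (\<lambda>_. 0)"
      by (simp only: V.scale_right_distrib mono_add hb_add[OF T polys_mono polys_mono])
  next
    fix b x
    have "mono \<gamma> (scV a (scV b x)) = (\<lambda>\<alpha>. scV b (mono \<gamma> (scV a x) \<alpha>))"
      by (simp only: V.scale_left_commute[of a b] mono_scaleV)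
    then show "T (mono \<gamma> (scV a (scV b x))) (\<lambda>_. 0) = scW b (T (mono \<gamma> (scV a x)) (\<lambda>_. 0))"
      by (simp add: hb_scale[OF T polys_mono])
  qed
next
  case False
  then have P: "Psi scV n T \<gamma> = (\<lambda>v. 0)" by (simp add: Psi_def fun_eq_iff)
  show ?thesis unfolding P Vector_Spaces.linear_iff using V.vs W.vs by simp
qed

lemma rep:
  assumes T: "T \<in> HB" and n: "c' - c = of_nat n" and h: "h \<in> polys"
  shows "T h = Phi0 scV n (Psi scV n T) h"
proof -
  define \<tau> where "\<tau> = Psi scV n T"
  have L: "\<And>\<gamma>. Vector_Spaces.linear scV scW (\<tau> \<gamma>)" unfolding \<tau>_def by (rule Psi_lin[OF T])
  define D where "D h = (\<lambda>\<alpha>. T h \<alpha> - Phi0 scV n \<tau> h \<alpha>)" for h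
  have D0: "D h (\<lambda>_. 0) = 0" if h: "h \<in> polys" for h
  proof -
    define G where "G = {\<gamma>::'m \<Rightarrow> nat. deg \<gamma> = n}"
    define S where "S = {\<gamma>. h \<gamma> \<noteq> 0}"
    define F where "F \<gamma> = T (mono \<gamma> (h \<gamma>)) (\<lambda>_. 0)" for \<gamma>
    have fS: "finite S" using h by (simp add: S_def polys_iff)
    have fG: "finite G" by (simp add: G_def finite_deg)
    have A: "T h (\<lambda>_. 0) = sum F S" using hb_at0[OF T h] by (simp add: F_def S_def)
    have "Phi0 scV n \<tau> h (\<lambda>_. 0) = (\<Sum>\<gamma>\<in>G. \<tau> \<gamma> (scV (cf (\<lambda>_. 0) \<gamma>) (h \<gamma>)))"
      by (simp add: Phi0_at0 G_def)
    also have "\<dots> = sum F G"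
    proof (rule sum.cong[OF refl])
      fix \<gamma> assume "\<gamma> \<in> G"
      then have "deg \<gamma> = n" by (simp add: G_def)
      moreover have "scV (1 / cf (\<lambda>_. 0) \<gamma>) (scV (cf (\<lambda>_. 0) \<gamma>) (h \<gamma>)) = h \<gamma>"
        using cf0_nz[of \<gamma>] by simp
      ultimately show "\<tau> \<gamma> (scV (cf (\<lambda>_. 0) \<gamma>) (h \<gamma>)) = F \<gamma>"
        by (simp add: \<tau>_def Psi_def F_def)
    qed
    finally have B: "Phi0 scV n \<tau> h (\<lambda>_. 0) = sum F G" .
    have "sum F S = sum F (S \<inter> G)"
    proof (rule sum.mono_neutral_right[OF fS])
      show "S \<inter> G \<subseteq> S" by blast
      show "\<forall>\<gamma>\<in>S - S \<inter> G. F \<gamma> = 0"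
      proof
        fix \<gamma> assume "\<gamma> \<in> S - S \<inter> G"
        then have d: "deg \<gamma> \<noteq> n" by (simp add: G_def)
        have "of_nat (deg \<gamma>) + c \<noteq> c'"
        proof
          assume "of_nat (deg \<gamma>) + c = c'"
          then have "(of_nat (deg \<gamma>) :: complex) = of_nat n" using n by (simp add: algebra_simps)
          then show False using d by (simp only: of_nat_eq_iff)
        qed
        then show "F \<gamma> = 0" unfolding F_def by (rule hb_grading[OF T])
      qed
    qed
    also have "\<dots> = sum F G"
    proof (rule sum.mono_neutral_left[OF fG])
      show "S \<inter> G \<subseteq> G" by blast
      show "\<forall>\<gamma>\<in>G - S \<inter> G. F \<gamma> = 0"
      proof
        fix \<gamma> assume "\<gamma> \<in> G - S \<inter> G"
        then have "h \<gamma> = 0" by (auto simp add: S_def)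
        moreover have "mono \<gamma> (0::'v) = (\<lambda>_. 0)" by (simp add: mono_def fun_eq_iff)
        ultimately show "F \<gamma> = 0" by (simp add: F_def hb_zero[OF T])
      qed
    qed
    finally show ?thesis using A B by (simp add: D_def)
  qed
  have Dd: "pder scW k (D h) = D (pder scV k h)" if h: "h \<in> polys" for h k
    by (simp add: D_def W.pder_diff hb_pder[OF T h] Phi0_pder[OF L])
  have "D h \<beta> = 0" for \<beta>
    by (rule vanish[where P="\<lambda>h. h \<in> polys"]) (use D0 Dd h V.polys_pder in auto)
  then show ?thesis by (auto simp: D_def fun_eq_iff \<tau>_def)
qed

end


context setting
begin

lemma Inv_zero:
  assumes L: "\<And>\<gamma>. Vector_Spaces.linear scV scW (\<tau> \<gamma>)"
  shows "Inv n \<phi> \<psi> \<tau> i j \<delta> 0 = 0"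
  by (simp add: Inv_def lin_facts(3)[OF L] \<phi>0 \<psi>0)

lemma Psi_InvT:
  assumes T: "T \<in> HB" and n: "c' - c = of_nat n"
  shows "Psi scV n T \<in> InvT scV \<phi> scW \<psi> n"
proof -
  define \<tau> where "\<tau> = Psi scV n T"
  have L: "\<And>\<gamma>. Vector_Spaces.linear scV scW (\<tau> \<gamma>)" unfolding \<tau>_def by (rule Psi_lin[OF T])
  have supp: "deg \<gamma> \<noteq> n \<Longrightarrow> \<tau> \<gamma> = (\<lambda>_. 0)" for \<gamma> by (simp add: \<tau>_def Psi_def fun_eq_iff)
  have I: "Inv n \<phi> \<psi> \<tau> i j \<delta> v = 0" for i j \<delta> v
  proof (cases "deg \<delta> = n")
    case False
    have "scW (dact i j \<gamma> \<delta>) (\<tau> \<gamma> v) = 0" if "\<gamma> \<in> {\<gamma>. deg \<gamma> = n}" for \<gamma>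
    proof -
      have "dact i j \<gamma> \<delta> = 0"
      proof (rule ccontr)
        assume "dact i j \<gamma> \<delta> \<noteq> 0"
        then have "1 \<le> \<gamma> i" "\<delta> = upd i j \<gamma>" by (auto simp: dact_upd split: if_splits)
        then have "deg \<delta> = deg \<gamma>" using deg_updij[of \<gamma> i j] by simp
        then show False using False that by simp
      qed
      then show ?thesis by simp
    qed
    then have S0: "(\<Sum>\<gamma>\<in>{\<gamma>. deg \<gamma> = n}. scW (dact i j \<gamma> \<delta>) (\<tau> \<gamma> v)) = 0"
      by (intro sum.neutral ballI)
    show ?thesis using False by (simp add: Inv_def supp \<psi>0 S0)
  next
    case True
    define w where "w = scV (1 / cf (\<lambda>_. 0) \<delta>) v"
    define h where "h = mono \<delta> w"
    have h: "h \<in> polys" by (simp add: h_def)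
    have h2: "(\<lambda>\<alpha>. Sx scV i j h \<alpha> + \<phi> i j (h \<alpha>)) \<in> polys"
      by (rule polys_add[OF V.polys_Sx[OF h] polys_map[of h "\<phi> i j", OF h \<phi>0]])
    have K: "Phi0 scV n \<tau> (\<lambda>\<alpha>. Sx scV i j h \<alpha> + \<phi> i j (h \<alpha>)) (\<lambda>_. 0) - \<psi> i j (Phi0 scV n \<tau> h (\<lambda>_. 0)) =
      - (\<Sum>\<delta>'\<in>{\<gamma>. deg \<gamma> = n}. Inv n \<phi> \<psi> \<tau> i j \<delta>' (scV (cf (\<lambda>_. 0) \<delta>') (h \<delta>')))"
      by (rule key_identity[of \<tau> \<phi> i j \<psi>, OF L \<phi>lin \<psi>lin])
    have "Phi0 scV n \<tau> (\<lambda>\<alpha>. Sx scV i j h \<alpha> + \<phi> i j (h \<alpha>)) (\<lambda>_. 0) - \<psi> i j (Phi0 scV n \<tau> h (\<lambda>_. 0))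
       = T (\<lambda>\<alpha>. Sx scV i j h \<alpha> + \<phi> i j (h \<alpha>)) (\<lambda>_. 0) - \<psi> i j (T h (\<lambda>_. 0))"
      using rep[OF T n h] rep[OF T n h2] by (simp add: \<tau>_def)
    also have "\<dots> = 0" by (simp add: hb_xd[OF T h] Sx_at0)
    finally have Z: "(\<Sum>\<delta>'\<in>{\<gamma>. deg \<gamma> = n}. Inv n \<phi> \<psi> \<tau> i j \<delta>' (scV (cf (\<lambda>_. 0) \<delta>') (h \<delta>'))) = 0"
      using K by simp
    have "(\<Sum>\<delta>'\<in>{\<gamma>. deg \<gamma> = n}. Inv n \<phi> \<psi> \<tau> i j \<delta>' (scV (cf (\<lambda>_. 0) \<delta>') (h \<delta>'))) =
        (\<Sum>\<delta>'\<in>{\<gamma>. deg \<gamma> = n}. if \<delta>' = \<delta> then Inv n \<phi> \<psi> \<tau> i j \<delta> v else 0)"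
    proof (rule sum.cong[OF refl])
      fix \<delta>' show "Inv n \<phi> \<psi> \<tau> i j \<delta>' (scV (cf (\<lambda>_. 0) \<delta>') (h \<delta>')) = (if \<delta>' = \<delta> then Inv n \<phi> \<psi> \<tau> i j \<delta> v else 0)"
      proof (cases "\<delta>' = \<delta>")
        case True
        have "scV (cf (\<lambda>_. 0) \<delta>) w = v" using cf0_nz[of \<delta>] by (simp add: w_def)
        then show ?thesis using True by (simp add: h_def mono_def)
      next
        case False
        then show ?thesis by (simp add: h_def mono_def Inv_zero[OF L])
      qed
    qed
    also have "\<dots> = Inv n \<phi> \<psi> \<tau> i j \<delta> v" by (subst sum.delta[OF finite_deg]) (simp add: True)
    finally show ?thesis using Z by simp
  qed
  show ?thesis unfolding InvT_iff \<tau>_def[symmetric] using L supp I by blast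
qed

lemma Phi0_xd':
  assumes tau: "\<tau> \<in> InvT scV \<phi> scW \<psi> n"
  shows "Phi0 scV n \<tau> (\<lambda>\<alpha>. Sx scV i j h \<alpha> + \<phi> i j (h \<alpha>)) =
         (\<lambda>\<alpha>. Sx scW i j (Phi0 scV n \<tau> h) \<alpha> + \<psi> i j (Phi0 scV n \<tau> h \<alpha>))"
  using tau unfolding InvT_iff by (intro Phi0_xd[OF _ \<phi>lin \<psi>lin]) auto

lemma Phi0_Lie:
  assumes tau: "\<tau> \<in> InvT scV \<phi> scW \<psi> n" and X: "X \<in> bm"
  shows "Phi0 scV n \<tau> (Lie scV \<phi> X h) = Lie scW \<psi> X (Phi0 scV n \<tau> h)"
proof -
  have L: "\<And>\<gamma>. Vector_Spaces.linear scV scW (\<tau> \<gamma>)" using tau unfolding InvT_iff by blast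
  have A: "Phi0 scV n \<tau> (\<lambda>\<alpha>. \<Sum>j\<in>UNIV. scV (X j (\<lambda>_. 0)) (pder scV j h \<alpha>)) =
     (\<lambda>\<beta>. \<Sum>j\<in>UNIV. scW (X j (\<lambda>_. 0)) (pder scW j (Phi0 scV n \<tau> h) \<beta>))"
    by (simp only: Phi0_sum[OF L] Phi0_scale[OF L] Phi0_pder[OF L])
  have B: "Phi0 scV n \<tau> (\<lambda>\<alpha>. \<Sum>i\<in>UNIV. \<Sum>j\<in>UNIV. scV (X j (ee i)) (Sx scV i j h \<alpha> + \<phi> i j (h \<alpha>))) =
     (\<lambda>\<beta>. \<Sum>i\<in>UNIV. \<Sum>j\<in>UNIV. scW (X j (ee i)) (Sx scW i j (Phi0 scV n \<tau> h) \<beta> + \<psi> i j (Phi0 scV n \<tau> h \<beta>)))"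
    by (simp only: Phi0_sum[OF L] Phi0_scale[OF L] Phi0_xd'[OF tau])
  show ?thesis
    unfolding V.Lie_bm[OF X] W.Lie_bm[OF X] Phi0_add[OF L] A B ..
qed

lemma Phi_HB:
  assumes tau: "\<tau> \<in> InvT scV \<phi> scW \<psi> n"
  shows "Phi scV n \<tau> \<in> HB"
proof -
  have L: "\<And>\<gamma>. Vector_Spaces.linear scV scW (\<tau> \<gamma>)" using tau unfolding InvT_iff by blast
  show ?thesis
    unfolding HomB_def
  proof (intro CollectI conjI ballI allI impI)
    fix h :: "('m \<Rightarrow> nat) \<Rightarrow> 'v" assume h: "h \<in> polys"
    show "Phi scV n \<tau> h \<in> polys" using polys_Phi0[OF L h] h by (simp add: Phi_def)
  next
    fix h :: "('m \<Rightarrow> nat) \<Rightarrow> 'v" assume h: "h \<notin> polys"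
    show "Phi scV n \<tau> h = (\<lambda>_. 0)" using h by (simp add: Phi_def)
  next
    fix h g :: "('m \<Rightarrow> nat) \<Rightarrow> 'v" assume h: "h \<in> polys" and g: "g \<in> polys"
    show "Phi scV n \<tau> (\<lambda>\<alpha>. h \<alpha> + g \<alpha>) = (\<lambda>\<alpha>. Phi scV n \<tau> h \<alpha> + Phi scV n \<tau> g \<alpha>)"
      using h g polys_add[OF h g] by (simp add: Phi_def Phi0_add[OF L])
  next
    fix a and h :: "('m \<Rightarrow> nat) \<Rightarrow> 'v" assume h: "h \<in> polys"
    show "Phi scV n \<tau> (\<lambda>\<alpha>. scV a (h \<alpha>)) = (\<lambda>\<alpha>. scW a (Phi scV n \<tau> h \<alpha>))"
      using h V.polys_scale[OF h, of a] by (simp add: Phi_def Phi0_scale[OF L])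
  next
    fix X :: "'m \<Rightarrow> ('m \<Rightarrow> nat) \<Rightarrow> complex" and h :: "('m \<Rightarrow> nat) \<Rightarrow> 'v" assume X: "X \<in> bm" and h: "h \<in> polys"
    show "Phi scV n \<tau> (Lie scV \<phi> X h) = Lie scW \<psi> X (Phi scV n \<tau> h)"
      using h V.polys_Lie[of X h \<phi>, OF X h \<phi>0] by (simp add: Phi_def Phi0_Lie[OF tau X])
  qed
qed

lemma Psi_Phi:
  assumes tau: "\<tau> \<in> InvT scV \<phi> scW \<psi> n"
  shows "Psi scV n (Phi scV n \<tau>) = \<tau>"
proof (intro ext)
  fix \<gamma> v
  have L: "\<And>\<gamma>. Vector_Spaces.linear scV scW (\<tau> \<gamma>)" using tau unfolding InvT_iff by blast
  show "Psi scV n (Phi scV n \<tau>) \<gamma> v = \<tau> \<gamma> v"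
  proof (cases "deg \<gamma> = n")
    case False
    then show ?thesis using tau unfolding InvT_iff by (simp add: Psi_def)
  next
    case True
    define w where "w = scV (1 / cf (\<lambda>_. 0) \<gamma>) v"
    have "Psi scV n (Phi scV n \<tau>) \<gamma> v = Phi0 scV n \<tau> (mono \<gamma> w) (\<lambda>_. 0)"
      using True by (simp add: Psi_def Phi_def w_def)
    also have "\<dots> = (\<Sum>\<gamma>'\<in>{\<gamma>. deg \<gamma> = n}. if \<gamma>' = \<gamma> then \<tau> \<gamma> v else 0)"
      unfolding Phi0_at0
    proof (rule sum.cong[OF refl])
      fix \<gamma>' show "\<tau> \<gamma>' (scV (cf (\<lambda>_. 0) \<gamma>') (mono \<gamma> w \<gamma>')) = (if \<gamma>' = \<gamma> then \<tau> \<gamma> v else 0)"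
      proof (cases "\<gamma>' = \<gamma>")
        case True
        have "scV (cf (\<lambda>_. 0) \<gamma>) w = v" using cf0_nz[of \<gamma>] by (simp add: w_def)
        then show ?thesis using True by (simp add: mono_def)
      next
        case False
        then show ?thesis by (simp add: mono_def lin_facts(3)[OF L])
      qed
    qed
    also have "\<dots> = \<tau> \<gamma> v" by (subst sum.delta[OF finite_deg]) (simp add: True)
    finally show ?thesis .
  qed
qed

lemma zero_HB: "(\<lambda>h \<alpha>. 0) \<in> HB"
proof -
  have "Lie scW \<psi> X (\<lambda>_. 0) = (\<lambda>_. 0)" if X: "X \<in> bm" for X
    by (simp add: W.Lie_bm[OF X] W.pder_zero Sx_def mulx_def \<psi>0)
  then show ?thesis by (simp add: HomB_def)
qed

lemma part1:
  assumes nn: "\<nexists>n::nat. c' - c = of_nat n"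
  shows "HB = {\<lambda>h \<alpha>. 0}"
proof
  show "{\<lambda>h \<alpha>. 0} \<subseteq> HB" using zero_HB by simp
  show "HB \<subseteq> {\<lambda>h \<alpha>. 0}"
  proof
    fix T assume T: "T \<in> HB"
    have Z: "T h \<beta> = 0" if h: "h \<in> polys" for h \<beta>
    proof (rule vanish[where P="\<lambda>h. h \<in> polys" and D=T, OF _ _ _ h])
      fix h :: "('m \<Rightarrow> nat) \<Rightarrow> 'v" assume h: "h \<in> polys"
      have "T (mono \<gamma> (h \<gamma>)) (\<lambda>_. 0) = 0" for \<gamma>
      proof (rule hb_grading[OF T])
        show "of_nat (deg \<gamma>) + c \<noteq> c'"
        proof
          assume "of_nat (deg \<gamma>) + c = c'"
          then have "c' - c = of_nat (deg \<gamma>)" by (simp add: algebra_simps)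
          then show False using nn by blast
        qed
      qed
      then show "T h (\<lambda>_. 0) = 0" by (simp add: hb_at0[OF T h])
    next
      fix h :: "('m \<Rightarrow> nat) \<Rightarrow> 'v" and k assume h: "h \<in> polys"
      show "pder scV k h \<in> polys" by (rule V.polys_pder[OF h])
      show "pder scW k (T h) = T (pder scV k h)" by (simp add: hb_pder[OF T h])
    qed
    have "T = (\<lambda>h \<alpha>. 0)"
    proof (intro ext)
      fix h \<alpha> show "T h \<alpha> = 0"
        by (cases "h \<in> polys") (simp_all add: Z hb_out[OF T])
    qed
    then show "T \<in> {\<lambda>h \<alpha>. 0}" by simp
  qed
qed

end


context setting
begin

lemma main_setting:
  "((\<nexists>n::nat. c' - c = of_nat n) \<longrightarrow> HB = {\<lambda>h \<alpha>. 0}) \<and>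
   (\<forall>n::nat. c' - c = of_nat n \<longrightarrow>
      (\<exists>\<Psi>. bij_betw \<Psi> HB (InvT scV \<phi> scW \<psi> n) \<and>
           (\<forall>T\<in>HB. \<forall>S\<in>HB. \<Psi> (hom_add T S) = tau_add (\<Psi> T) (\<Psi> S)) \<and>
           (\<forall>a. \<forall>T\<in>HB. \<Psi> (hom_scale scW a T) = tau_scale scW a (\<Psi> T))))"
proof (intro conjI impI allI)
  assume "\<nexists>n::nat. c' - c = of_nat n"
  then show "HB = {\<lambda>h \<alpha>. 0}" by (rule part1)
next
  fix n :: nat assume n: "c' - c = of_nat n"
  show "\<exists>\<Psi>. bij_betw \<Psi> HB (InvT scV \<phi> scW \<psi> n) \<and>
           (\<forall>T\<in>HB. \<forall>S\<in>HB. \<Psi> (hom_add T S) = tau_add (\<Psi> T) (\<Psi> S)) \<and>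
           (\<forall>a. \<forall>T\<in>HB. \<Psi> (hom_scale scW a T) = tau_scale scW a (\<Psi> T))"
  proof (intro exI conjI ballI allI)
    show "bij_betw (Psi scV n) HB (InvT scV \<phi> scW \<psi> n)"
      unfolding bij_betw_def
    proof
      show "inj_on (Psi scV n) HB"
      proof (rule inj_onI)
        fix T S assume T: "T \<in> HB" and S: "S \<in> HB" and e: "Psi scV n T = Psi scV n S"
        show "T = S"
        proof
          fix h show "T h = S h"
          proof (cases "h \<in> polys")
            case True
            then show ?thesis using rep[OF T n True] rep[OF S n True] e by simp
          next
            case False
            then show ?thesis by (simp add: hb_out[OF T] hb_out[OF S])
          qed
        qed
      qed
      show "Psi scV n ` HB = InvT scV \<phi> scW \<psi> n"
      proof
        show "Psi scV n ` HB \<subseteq> InvT scV \<phi> scW \<psi> n" using Psi_InvT[OF _ n] by blast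
        show "InvT scV \<phi> scW \<psi> n \<subseteq> Psi scV n ` HB"
        proof
          fix \<tau> assume tau: "\<tau> \<in> InvT scV \<phi> scW \<psi> n"
          then have "\<tau> = Psi scV n (Phi scV n \<tau>)" by (simp add: Psi_Phi)
          then show "\<tau> \<in> Psi scV n ` HB" using Phi_HB[OF tau] by blast
        qed
      qed
    qed
  next
    fix T S assume "T \<in> HB" "S \<in> HB"
    show "Psi scV n (hom_add T S) = tau_add (Psi scV n T) (Psi scV n S)"
      by (simp add: Psi_def hom_add_def tau_add_def fun_eq_iff)
  next
    fix a T assume "T \<in> HB"
    show "Psi scV n (hom_scale scW a T) = tau_scale scW a (Psi scV n T)"
      by (simp add: Psi_def hom_scale_def tau_scale_def fun_eq_iff)
  qed
qed

end

theorem mainTheorem9: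
  fixes scV :: "complex \<Rightarrow> 'v::ab_group_add \<Rightarrow> 'v" and BV :: "'v set"
    and scW :: "complex \<Rightarrow> 'w::ab_group_add \<Rightarrow> 'w" and BW :: "'w set"
    and \<phi> :: "'m::finite \<Rightarrow> 'm \<Rightarrow> 'v \<Rightarrow> 'v" and \<psi> :: "'m \<Rightarrow> 'm \<Rightarrow> 'w \<Rightarrow> 'w"
    and c c' :: complex
  assumes "finite_dimensional_vector_space scV BV"
    and "finite_dimensional_vector_space scW BW"
    and "is_lm_rep scV \<phi>" and "is_lm_rep scW \<psi>"
    and "Ex_acts_by scV \<phi> c" and "Ex_acts_by scW \<psi> c'"
  shows "((\<nexists>n::nat. c' - c = of_nat n) \<longrightarrow> HomB scV \<phi> scW \<psi> = {\<lambda>h \<alpha>. 0}) \<and>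
         (\<forall>n::nat. c' - c = of_nat n \<longrightarrow>
            (\<exists>\<Psi>. bij_betw \<Psi> (HomB scV \<phi> scW \<psi>) (InvT scV \<phi> scW \<psi> n) \<and>
                 (\<forall>T\<in>HomB scV \<phi> scW \<psi>. \<forall>S\<in>HomB scV \<phi> scW \<psi>.
                     \<Psi> (hom_add T S) = tau_add (\<Psi> T) (\<Psi> S)) \<and>
                 (\<forall>a. \<forall>T\<in>HomB scV \<phi> scW \<psi>.
                     \<Psi> (hom_scale scW a T) = tau_scale scW a (\<Psi> T))))"
proof -
  have vV: "vector_space scV"
    using assms(1) by (simp add: finite_dimensional_vector_space_def)
  have vW: "vector_space scW"
    using assms(2) by (simp add: finite_dimensional_vector_space_def)
  interpret S: setting scV scW \<phi> \<psi> c c'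
    by (intro setting.intro pair.intro cvs.intro setting_axioms.intro vV vW assms(5,6))
      (use assms(3,4) in \<open>simp_all add: is_lm_rep_def\<close>)
  show ?thesis by (rule S.main_setting)
qed


end
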